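(* In the changepoint model of the context, let $T_\ell:\mathbb X\to\mathbb R$ be measurable and integrable with respect to all $H_{ji}$, and set $H^{T_\ell}_{ji}=\int T_\ell(x)\,H_{ji}(dx)$. Then for $0<i\le n$, $$\mathbb E\big[T_\ell(X_i)\mathbf 1\{C_i=i\}\mid Y_{1:n}=y_{1:n}\big]=\sum_{j=i}^{n-1}H^{T_\ell}_{ij}\,\tilde c_{ij}\,\tilde q_{j+1}+H^{T_\ell}_{in}\,\tilde c_{in}.$$
   Context: Model: Let $n\ge 1$ and fix observed data $y_1,\dots,y_n$. Let $(\mathbb X,\mathcal X)$, $(\mathbb Y,\mathcal Y)$ be standard Borel spaces, $\psi$ a $\sigma$-finite measure on $(\mathbb Y,\mathcal Y)$, $\mathcal J$ a probability measure on $(\mathbb X,\mathcal X)$, and $q_{ji}\in[0,1]$ for $0\le j<i\le n$. The model consists of random variables $C_i\in\{0,\dots,i\}$, $X_i\in\mathbb X$, $Y_i\in\mathbb Y$, $i=1,\dots,n$, with joint law factorizing as: $P(C_1=0)=q_{01}$, $P(C_1=1)=1-q_{01}$; for $i\ge2$, $C_i$ depends on the past only through $C_{i-1}$, with $P(C_i=j\mid C_{i-1}=j)=q_{ji}$ and $P(C_i=i\mid C_{i-1}=j)=1-q_{ji}$ ($0\le j\le i-1$); $X_1\sim\mathcal J$ independent of $C_1$; for $i\ge 2$, $X_i$ depends on the past only through $(C_i,X_{i-1})$, with $X_i\sim\mathcal J$ if $C_i=i$ and $X_i=X_{i-1}$ if $C_i<i$; $Y_i$ depends on all other variables only through $X_i$,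 with density $p(Y_i=y\mid X_i=x)$ w.r.t. $\psi$. Assume $\int\prod_{\ell=j}^i p(Y_\ell=y_\ell\mid X_\ell=x)\,\mathcal J(dx)>0$ for all $0<j\le i\le n$. $Y_{a:b}=y_{a:b}$ abbreviates $Y_a=y_a,\dots,Y_b=y_b$. Notation: $H_{ji}=P(X_i\in\cdot\mid C_i=j,Y_{1:i}=y_{1:i})$; $\tilde c_{ji}=P(C_i=j\mid C_{i+1}=i+1,Y_{1:i}=y_{1:i})$ for $0<i<n$, and $\tilde c_{jn}=P(C_n=j\mid Y_{1:n}=y_{1:n})$; $\tilde q_i=P(C_i=i\mid Y_{1:n}=y_{1:n})$. *)

theory Defs
  imports "HOL-Probability.Probability"
begin

text \<open>A state at time i is the pair (C_i, X_i).
  The prior law of the path (C_1,X_1),...,(C_k,X_k) is a measure on functions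
  nat => nat * 'x, extensional on {1..k}. The observations Y_i = y_i enter only
  through the likelihood prod_l p(Y_l = y_l | X_l = x); conditioning on
  Y_{1:i} = y_{1:i} is defined by Bayes' formula (density version).\<close>

definition cp_S :: "(nat \<times> 'x::topological_space) measure" where
  "cp_S = count_space UNIV \<Otimes>\<^sub>M borel"

definition cp_init :: "(nat \<Rightarrow> nat \<Rightarrow> real) \<Rightarrow> 'x::topological_space measure
    \<Rightarrow> (nat \<times> 'x) measure" where
  "cp_init q J = measure_pmf (bernoulli_pmf (q 0 1)) \<bind>
      (\<lambda>b. distr J cp_S (\<lambda>x. (if b then 0 else 1, x)))"

definition cp_step :: "(nat \<Rightarrow> nat \<Rightarrow> real) \<Rightarrow> 'x::topological_space measure
    \<Rightarrow> nat \<Rightarrow> nat \<times> 'x \<Rightarrow> (nat \<times> 'x) measure" where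
  "cp_step q J i s = measure_pmf (bernoulli_pmf (q (fst s) i)) \<bind>
      (\<lambda>b. if b then return cp_S s else distr J cp_S (\<lambda>x. (i, x)))"

primrec cp_prior :: "(nat \<Rightarrow> nat \<Rightarrow> real) \<Rightarrow> 'x::topological_space measure
    \<Rightarrow> nat \<Rightarrow> (nat \<Rightarrow> nat \<times> 'x) measure" where
  "cp_prior q J 0 = return (PiM {} (\<lambda>_. cp_S)) (\<lambda>_. undefined)"
| "cp_prior q J (Suc k) = cp_prior q J k \<bind>
      (\<lambda>\<omega>. distr (if k = 0 then cp_init q J else cp_step q J (Suc k) (\<omega> k))
                 (PiM {1..Suc k} (\<lambda>_. cp_S)) (\<lambda>s. fun_upd \<omega> (Suc k) s))"

definition cp_C :: "nat \<Rightarrow> (nat \<Rightarrow> nat \<times> 'x) \<Rightarrow> nat" where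
  "cp_C i \<omega> = fst (\<omega> i)"

definition cp_X :: "nat \<Rightarrow> (nat \<Rightarrow> nat \<times> 'x) \<Rightarrow> 'x" where
  "cp_X i \<omega> = snd (\<omega> i)"

definition cp_lik :: "('x \<Rightarrow> 'y \<Rightarrow> real) \<Rightarrow> (nat \<Rightarrow> 'y) \<Rightarrow> nat
    \<Rightarrow> (nat \<Rightarrow> nat \<times> 'x) \<Rightarrow> real" where
  "cp_lik p y i \<omega> = (\<Prod>l\<in>{1..i}. p (cp_X l \<omega>) (y l))"

text \<open>E[ f | B, Y_{1:i} = y_{1:i} ] for an event B of the (C,X)-path, computed
  with the prior law of the whole path (C,X)_{1:n}.\<close>
definition cp_condE :: "(nat \<Rightarrow> nat \<Rightarrow> real) \<Rightarrow> 'x::topological_space measure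
    \<Rightarrow> ('x \<Rightarrow> 'y \<Rightarrow> real) \<Rightarrow> (nat \<Rightarrow> 'y) \<Rightarrow> nat \<Rightarrow> nat
    \<Rightarrow> ((nat \<Rightarrow> nat \<times> 'x) \<Rightarrow> real) \<Rightarrow> (nat \<Rightarrow> nat \<times> 'x) set \<Rightarrow> real" where
  "cp_condE q J p y n i f B =
     (\<integral>\<omega>. f \<omega> * indicator B \<omega> * cp_lik p y i \<omega> \<partial>cp_prior q J n)
     / (\<integral>\<omega>. indicator B \<omega> * cp_lik p y i \<omega> \<partial>cp_prior q J n)"

definition cp_condP :: "(nat \<Rightarrow> nat \<Rightarrow> real) \<Rightarrow> 'x::topological_space measure
    \<Rightarrow> ('x \<Rightarrow> 'y \<Rightarrow> real) \<Rightarrow> (nat \<Rightarrow> 'y) \<Rightarrow> nat \<Rightarrow> nat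
    \<Rightarrow> (nat \<Rightarrow> nat \<times> 'x) set \<Rightarrow> (nat \<Rightarrow> nat \<times> 'x) set \<Rightarrow> real" where
  "cp_condP q J p y n i A B = cp_condE q J p y n i (indicator A) B"

text \<open>H_{ji} = P(X_i \<in> . | C_i = j, Y_{1:i} = y_{1:i}) as a measure on 'x.\<close>
definition cp_H :: "(nat \<Rightarrow> nat \<Rightarrow> real) \<Rightarrow> 'x::topological_space measure
    \<Rightarrow> ('x \<Rightarrow> 'y \<Rightarrow> real) \<Rightarrow> (nat \<Rightarrow> 'y) \<Rightarrow> nat \<Rightarrow> nat \<Rightarrow> nat \<Rightarrow> 'x measure" where
  "cp_H q J p y n j i =
     distr (density (cp_prior q J n)
              (\<lambda>\<omega>. ennreal (indicator {\<omega>. cp_C i \<omega> = j} \<omega> * cp_lik p y i \<omega>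
                 / (\<integral>\<omega>'. indicator {\<omega>'. cp_C i \<omega>' = j} \<omega>' * cp_lik p y i \<omega>' \<partial>cp_prior q J n))))
           borel (cp_X i)"

definition cp_ct :: "(nat \<Rightarrow> nat \<Rightarrow> real) \<Rightarrow> 'x::topological_space measure
    \<Rightarrow> ('x \<Rightarrow> 'y \<Rightarrow> real) \<Rightarrow> (nat \<Rightarrow> 'y) \<Rightarrow> nat \<Rightarrow> nat \<Rightarrow> nat \<Rightarrow> real" where
  "cp_ct q J p y n j i =
     (if i < n then cp_condP q J p y n i {\<omega>. cp_C i \<omega> = j} {\<omega>. cp_C (Suc i) \<omega> = Suc i}
      else cp_condP q J p y n n {\<omega>. cp_C n \<omega> = j} UNIV)"

definition cp_qt :: "(nat \<Rightarrow> nat \<Rightarrow> real) \<Rightarrow> 'x::topological_space measure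
    \<Rightarrow> ('x \<Rightarrow> 'y \<Rightarrow> real) \<Rightarrow> (nat \<Rightarrow> 'y) \<Rightarrow> nat \<Rightarrow> nat \<Rightarrow> real" where
  "cp_qt q J p y n i = cp_condP q J p y n n {\<omega>. cp_C i \<omega> = i} UNIV"

end

theory Submission
  imports Defs
begin

lemma transfer:
  fixes u v :: "_ \<Rightarrow> real"
  assumes um: "u \<in> borel_measurable M" and iv: "integrable N v" and c: "0 \<le> c"
    and pos: "(\<integral>\<^sup>+x. ennreal (u x) \<partial>M) = ennreal c * (\<integral>\<^sup>+x. ennreal (v x) \<partial>N)"
    and neg: "(\<integral>\<^sup>+x. ennreal (- u x) \<partial>M) = ennreal c * (\<integral>\<^sup>+x. ennreal (- v x) \<partial>N)"
  shows "integrable M u \<and> integral\<^sup>L M u = c * integral\<^sup>L N v"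
proof -
  have A: "(\<integral>\<^sup>+x. ennreal (v x) \<partial>N) \<noteq> \<infinity>" and B: "(\<integral>\<^sup>+x. ennreal (- v x) \<partial>N) \<noteq> \<infinity>"
    using iv unfolding real_integrable_def by auto
  have A': "(\<integral>\<^sup>+x. ennreal (u x) \<partial>M) \<noteq> \<infinity>" using A unfolding pos
    by (simp add: ennreal_mult_eq_top_iff)
  have B': "(\<integral>\<^sup>+x. ennreal (- u x) \<partial>M) \<noteq> \<infinity>" using B unfolding neg
    by (simp add: ennreal_mult_eq_top_iff)
  have iu: "integrable M u" unfolding real_integrable_def using um A' B' by auto
  have "integral\<^sup>L M u = enn2real (ennreal c * (\<integral>\<^sup>+x. ennreal (v x) \<partial>N)) - enn2real (ennreal c * (\<integral>\<^sup>+x. ennreal (- v x) \<partial>N))"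
    unfolding real_lebesgue_integral_def[OF iu] pos neg ..
  also have "\<dots> = c * (enn2real (\<integral>\<^sup>+x. ennreal (v x) \<partial>N) - enn2real (\<integral>\<^sup>+x. ennreal (- v x) \<partial>N))"
    using c by (simp add: enn2real_mult right_diff_distrib)
  also have "\<dots> = c * integral\<^sup>L N v"
    unfolding real_lebesgue_integral_def[OF iv] ..
  finally show ?thesis using iu by simp
qed

locale cpm =
  fixes q :: "nat \<Rightarrow> nat \<Rightarrow> real" and J :: "'x::topological_space measure"
  assumes J_prob: "prob_space J" and J_sets: "sets J = sets borel"
begin

abbreviation "S \<equiv> (cp_S :: (nat \<times> 'x) measure)"
abbreviation "PS k \<equiv> PiM {1..k} (\<lambda>_. S)"
abbreviation "P k \<equiv> cp_prior q J k"
definition "K k \<omega> = (if k = 0 then cp_init q J else cp_step q J (Suc k) (\<omega> k))"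

lemma space_J[simp]: "space J = UNIV"
  using sets_eq_imp_space_eq[OF J_sets] by simp

lemma space_S[simp]: "space S = UNIV"
  by (simp add: cp_S_def space_pair_measure)

lemma sets_cp_step[simp]: "sets (cp_step q J i s) = sets S"
  unfolding cp_step_def
  by (subst sets_bind[where N=cp_S]) (auto)

lemma sets_cp_init[simp]: "sets (cp_init q J) = sets S"
  unfolding cp_init_def
  by (subst sets_bind[where N=cp_S]) (auto)

lemma Pair_meas: "Pair i \<in> J \<rightarrow>\<^sub>M S"
  unfolding cp_S_def measurable_cong_sets[OF J_sets refl] by measurable

lemma kern_bool: "(\<lambda>b. if b then return S s0 else distr J S (Pair i))
     \<in> count_space UNIV \<rightarrow>\<^sub>M subprob_algebra S"
  apply (rule measurable_count_space_eq1[THEN iffD2])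
  apply (auto simp: space_subprob_algebra subprob_space_return Pair_meas
     intro!: prob_space_imp_subprob_space prob_space.prob_space_distr J_prob prob_space_return split: if_splits)
  done

lemma nn_step:
  assumes g: "g \<in> borel_measurable S"
  shows "(\<integral>\<^sup>+s. g s \<partial>cp_step q J i s0) =
     ennreal (pmf (bernoulli_pmf (q (fst s0) i)) True) * g s0
   + ennreal (pmf (bernoulli_pmf (q (fst s0) i)) False) * (\<integral>\<^sup>+x. g (i, x) \<partial>J)"
proof -
  have m: "(\<lambda>b. if b then return cp_S s0 else distr J cp_S (\<lambda>x. (i, x)))
     \<in> measurable (measure_pmf (bernoulli_pmf (q (fst s0) i))) (subprob_algebra S)"
    apply (subst measurable_cong_sets[OF sets_measure_pmf_count_space refl])
    using kern_bool by simp
  show ?thesis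
    unfolding cp_step_def
    apply (subst nn_integral_bind[OF g m])
    apply (subst nn_integral_measure_pmf_support[where A=UNIV])
    apply (auto simp: UNIV_bool nn_integral_return nn_integral_distr g Pair_meas)
    apply (simp add: ac_simps)
    done
qed

lemma Pair_meas2: "(\<lambda>x. (if b then 0 else 1, x)) \<in> J \<rightarrow>\<^sub>M S"
  unfolding cp_S_def measurable_cong_sets[OF J_sets refl] by measurable

lemma nn_init:
  assumes g: "g \<in> borel_measurable S"
  shows "(\<integral>\<^sup>+s. g s \<partial>cp_init q J) =
     ennreal (pmf (bernoulli_pmf (q 0 1)) True) * (\<integral>\<^sup>+x. g (0, x) \<partial>J)
   + ennreal (pmf (bernoulli_pmf (q 0 1)) False) * (\<integral>\<^sup>+x. g (1, x) \<partial>J)"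
proof -
  have m0: "(\<lambda>b. distr J S (\<lambda>x. (if b then 0 else 1, x))) \<in> count_space UNIV \<rightarrow>\<^sub>M subprob_algebra S"
    apply (rule measurable_count_space_eq1[THEN iffD2])
    apply (auto simp: space_subprob_algebra Pair_meas2
     intro!: prob_space_imp_subprob_space prob_space.prob_space_distr J_prob)
    done
  have m: "(\<lambda>b. distr J S (\<lambda>x. (if b then 0 else 1, x)))
     \<in> measurable (measure_pmf (bernoulli_pmf (q 0 1))) (subprob_algebra S)"
    apply (subst measurable_cong_sets[OF sets_measure_pmf_count_space refl])
    using m0 by simp
  show ?thesis
    unfolding cp_init_def
    apply (subst nn_integral_bind[OF g m])
    apply (subst nn_integral_measure_pmf_support[where A=UNIV])
    apply (auto simp: UNIV_bool nn_integral_distr g Pair_meas2)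
    apply (simp add: ac_simps)
    done
qed

lemma pmf_TF: "pmf (bernoulli_pmf a) True + pmf (bernoulli_pmf a) False = 1"
proof -
  have "(\<Sum>x\<in>UNIV. pmf (bernoulli_pmf a) x) = 1" by (rule sum_pmf_eq_1) auto
  then show ?thesis by (simp add: UNIV_bool)
qed

lemma emJ[simp]: "emeasure J UNIV = 1"
  using prob_space.emeasure_space_1[OF J_prob] by simp

lemma TF_enn: "ennreal (pmf (bernoulli_pmf a) True) + ennreal (pmf (bernoulli_pmf a) False) = 1"
  by (simp add: ennreal_plus[symmetric] pmf_TF del: ennreal_plus)

lemma prob_J_1: "(\<integral>\<^sup>+x. 1 \<partial>J) = 1"
  using prob_space.emeasure_space_1[OF J_prob] by simp

lemma prob_cp_step: "prob_space (cp_step q J i s)"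
proof
  have "emeasure (cp_step q J i s) (space (cp_step q J i s)) = (\<integral>\<^sup>+x. 1 \<partial>cp_step q J i s)"
    by simp
  also have "\<dots> = 1" by (subst nn_step) (auto simp: prob_J_1 TF_enn)
  finally show "emeasure (cp_step q J i s) (space (cp_step q J i s)) = 1" .
qed

lemma prob_cp_init: "prob_space (cp_init q J)"
proof
  have "emeasure (cp_init q J) (space (cp_init q J)) = (\<integral>\<^sup>+x. 1 \<partial>cp_init q J)"
    by simp
  also have "\<dots> = 1" by (subst nn_init) (auto simp: prob_J_1 TF_enn)
  finally show "emeasure (cp_init q J) (space (cp_init q J)) = 1" .
qed

lemma meas_bern: "(\<lambda>s. measure_pmf (bernoulli_pmf (q (fst s) i))) \<in> S \<rightarrow>\<^sub>M subprob_algebra (count_space UNIV)"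
proof -
  have "(\<lambda>c. measure_pmf (bernoulli_pmf (q c i))) \<in> count_space UNIV \<rightarrow>\<^sub>M subprob_algebra (count_space UNIV)"
    apply (rule measurable_count_space_eq1[THEN iffD2])
    apply (auto simp: space_subprob_algebra intro!: prob_space_imp_subprob_space measure_pmf.prob_space_axioms)
    done
  moreover have "fst \<in> S \<rightarrow>\<^sub>M count_space UNIV" unfolding cp_S_def by simp
  ultimately show ?thesis by (rule measurable_compose[rotated])
qed

lemma meas_step: "cp_step q J i \<in> S \<rightarrow>\<^sub>M subprob_algebra S"
proof -
  have g: "(\<lambda>x. if snd x then return S (fst x) else distr J S (Pair i)) \<in> S \<Otimes>\<^sub>M count_space UNIV \<rightarrow>\<^sub>M subprob_algebra S"
    apply (rule measurable_If)
      apply (rule measurable_compose[OF measurable_fst return_measurable])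
     apply (rule measurable_const)
    apply (auto simp: space_subprob_algebra Pair_meas
     intro!: prob_space_imp_subprob_space prob_space.prob_space_distr J_prob)
    done
  have "(\<lambda>s. measure_pmf (bernoulli_pmf (q (fst s) i)) \<bind> (\<lambda>b. if b then return S s else distr J S (Pair i)))
     \<in> S \<rightarrow>\<^sub>M subprob_algebra S"
    apply (rule measurable_bind'[OF meas_bern])
    using g by (simp add: case_prod_beta')
  then show ?thesis unfolding cp_step_def[abs_def] by simp
qed

lemma meas_K: "K k \<in> PS k \<rightarrow>\<^sub>M subprob_algebra S"
proof (cases "k = 0")
  case True
  then show ?thesis unfolding K_def[abs_def]
    by (auto intro!: measurable_const simp: space_subprob_algebra prob_cp_init prob_space_imp_subprob_space)
next
  case False
  then have "(\<lambda>\<omega>. \<omega> k) \<in> PS k \<rightarrow>\<^sub>M S" by simp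
  then show ?thesis unfolding K_def[abs_def] using False
    by (simp add: measurable_compose[OF _ meas_step])
qed

lemma sets_K[simp]: "sets (K k \<omega>) = sets S"
  by (simp add: K_def)

lemma prob_K: "prob_space (K k \<omega>)"
  by (simp add: K_def prob_cp_init prob_cp_step)

lemma ins_Suc: "insert (Suc k) {1..k} = {1..Suc k}" by auto

lemma meas_upd: "case_prod (\<lambda>\<omega> s. fun_upd \<omega> (Suc k) s) \<in> PS k \<Otimes>\<^sub>M S \<rightarrow>\<^sub>M PS (Suc k)"
  unfolding ins_Suc[symmetric] by (rule measurable_add_dim)

lemma meas_upd1: "\<omega> \<in> space (PS k) \<Longrightarrow> fun_upd \<omega> (Suc k) \<in> S \<rightarrow>\<^sub>M PS (Suc k)"
  using measurable_compose[OF measurable_Pair1'[of \<omega> "PS k" S] meas_upd] by simp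

lemma meas_upd1K: "\<omega> \<in> space (PS k) \<Longrightarrow> fun_upd \<omega> (Suc k) \<in> K k \<omega> \<rightarrow>\<^sub>M PS (Suc k)"
  using meas_upd1 by (simp cong: measurable_cong_sets)

definition "KK k \<omega> = distr (K k \<omega>) (PS (Suc k)) (\<lambda>s. fun_upd \<omega> (Suc k) s)"

lemma meas_KK: "KK k \<in> PS k \<rightarrow>\<^sub>M subprob_algebra (PS (Suc k))"
  unfolding KK_def[abs_def] by (rule measurable_distr2[OF meas_upd meas_K])

lemma P_Suc: "P (Suc k) = P k \<bind> KK k"
  by (simp add: KK_def[abs_def] K_def)

lemma space_PS_ne: "space (PS k) \<noteq> {}"
  by (simp add: space_PiM PiE_eq_empty_iff)

lemma sets_P[simp]: "sets (P k) = sets (PS k)"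
proof (induction k)
  case 0
  then show ?case by simp
next
  case (Suc k)
  have sp: "space (P k) \<noteq> {}" using sets_eq_imp_space_eq[OF Suc] space_PS_ne by simp
  show ?case unfolding P_Suc
    by (rule sets_bind[OF _ sp]) (simp add: KK_def)
qed

lemma space_P[simp]: "space (P k) = space (PS k)"
  by (rule sets_eq_imp_space_eq) simp

lemma meas_KK': "KK k \<in> P k \<rightarrow>\<^sub>M subprob_algebra (PS (Suc k))"
  using meas_KK by (simp cong: measurable_cong_sets)

lemma prior_rec:
  assumes f: "f \<in> borel_measurable (PS (Suc k))"
  shows "(\<integral>\<^sup>+\<omega>. f \<omega> \<partial>P (Suc k)) = (\<integral>\<^sup>+\<omega>. (\<integral>\<^sup>+s. f (fun_upd \<omega> (Suc k) s) \<partial>K k \<omega>) \<partial>P k)"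
  unfolding P_Suc
  apply (subst nn_integral_bind[OF f meas_KK'])
  apply (rule nn_integral_cong)
  apply (simp only: KK_def space_P)
  apply (subst nn_integral_distr)
    apply (erule meas_upd1K)
   apply (subst measurable_cong_sets[OF sets_distr refl])
   apply (rule f)
  apply (rule refl)
  done

end

locale cpm2 = cpm q J for q and J :: "'x::topological_space measure" +
  fixes p :: "'x \<Rightarrow> 'y \<Rightarrow> real" and y :: "nat \<Rightarrow> 'y" and T :: "'x \<Rightarrow> real"
  assumes p_meas: "\<And>z. (\<lambda>x. p x z) \<in> borel_measurable borel"
    and p_nonneg: "\<And>x z. 0 \<le> p x z"
    and T_meas: "T \<in> borel_measurable borel"
begin

lemma meas_comp: "l \<in> {1..m} \<Longrightarrow> (\<lambda>\<omega>. \<omega> l) \<in> PS m \<rightarrow>\<^sub>M S"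
  by simp

lemma meas_C: "l \<in> {1..m} \<Longrightarrow> cp_C l \<in> PS m \<rightarrow>\<^sub>M count_space UNIV"
  unfolding cp_C_def[abs_def]
  by (rule measurable_compose[OF meas_comp]) (auto simp: cp_S_def)

lemma meas_X: "l \<in> {1..m} \<Longrightarrow> cp_X l \<in> PS m \<rightarrow>\<^sub>M borel"
  unfolding cp_X_def[abs_def]
  by (rule measurable_compose[OF meas_comp]) (auto simp: cp_S_def)

lemma meas_TX: "l \<in> {1..m} \<Longrightarrow> (\<lambda>\<omega>. f (cp_X l \<omega>)) \<in> borel_measurable (PS m)"
  if "f \<in> borel_measurable borel" for f :: "'x \<Rightarrow> real"
  using measurable_compose[OF meas_X that] .

lemma meas_pX: "l \<in> {1..m} \<Longrightarrow> (\<lambda>\<omega>. p (cp_X l \<omega>) z) \<in> borel_measurable (PS m)"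
  using meas_TX[OF p_meas] .

lemma meas_lik: "j \<le> m \<Longrightarrow> cp_lik p y j \<in> borel_measurable (PS m)"
  unfolding cp_lik_def[abs_def]
  by (rule borel_measurable_prod, rule meas_pX) auto

lemma meas_indC: "l \<in> {1..m} \<Longrightarrow> (\<lambda>\<omega>. indicator {\<omega>. cp_C l \<omega> = c} \<omega> :: real) \<in> borel_measurable (PS m)"
proof -
  assume l: "l \<in> {1..m}"
  have "(\<lambda>\<omega>. indicator {c} (cp_C l \<omega>) :: real) \<in> borel_measurable (PS m)"
    by (rule measurable_compose[OF meas_C[OF l]]) simp
  then show ?thesis by (simp add: indicator_def)
qed

lemma lik_split: "j \<le> n \<Longrightarrow> cp_lik p y n \<omega> = cp_lik p y j \<omega> * (\<Prod>l\<in>{Suc j..n}. p (cp_X l \<omega>) (y l))"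
proof -
  assume "j \<le> n"
  then have "{1..n} = {1..j} \<union> {Suc j..n}" by auto
  then show ?thesis unfolding cp_lik_def
    by (simp add: prod.union_disjoint)
qed

lemma lik_nonneg: "0 \<le> cp_lik p y j \<omega>"
  unfolding cp_lik_def by (simp add: prod_nonneg p_nonneg)

lemma marg:
  fixes f :: "_ \<Rightarrow> ennreal"
  assumes kn: "k \<le> n" and fm: "\<And>m. k \<le> m \<Longrightarrow> f \<in> borel_measurable (PS m)"
    and fu: "\<And>\<omega> m s. k < m \<Longrightarrow> f (fun_upd \<omega> m s) = f \<omega>"
  shows "(\<integral>\<^sup>+\<omega>. f \<omega> \<partial>P n) = (\<integral>\<^sup>+\<omega>. f \<omega> \<partial>P k)"
  using kn
proof (induction n rule: dec_induct)
  case base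
  then show ?case by simp
next
  case (step n)
  have "(\<integral>\<^sup>+\<omega>. f \<omega> \<partial>P (Suc n)) = (\<integral>\<^sup>+\<omega>. (\<integral>\<^sup>+s. f (fun_upd \<omega> (Suc n) s) \<partial>K n \<omega>) \<partial>P n)"
    by (rule prior_rec) (rule fm, use step in simp)
  also have "\<dots> = (\<integral>\<^sup>+\<omega>. f \<omega> \<partial>P n)"
  proof (rule nn_integral_cong)
    fix \<omega>
    have "(\<integral>\<^sup>+s. f (fun_upd \<omega> (Suc n) s) \<partial>K n \<omega>) = (\<integral>\<^sup>+s. f \<omega> \<partial>K n \<omega>)"
      using step fu by simp
    also have "\<dots> = f \<omega>"
      using prob_space.emeasure_space_1[OF prob_K] by simp
    finally show "(\<integral>\<^sup>+s. f (fun_upd \<omega> (Suc n) s) \<partial>K n \<omega>) = f \<omega>" .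
  qed
  finally show ?case using step by simp
qed

definition good :: "nat \<Rightarrow> (nat \<Rightarrow> nat \<times> 'x) \<Rightarrow> bool" where
  "good k \<omega> = (\<forall>l\<in>{1..k}. cp_C l \<omega> \<le> l \<and> (2 \<le> l \<longrightarrow> (cp_C l \<omega> = l \<or>
      (cp_C l \<omega> = cp_C (l - 1) \<omega> \<and> T (cp_X l \<omega>) = T (cp_X (l - 1) \<omega>)))))"

lemma pred_cnt: "f \<in> M \<rightarrow>\<^sub>M count_space UNIV \<Longrightarrow> Measurable.pred M (\<lambda>x. Q (f x))"
  by (rule measurable_compose[OF _ measurable_count_space])

lemma pred_good: "k \<le> m \<Longrightarrow> Measurable.pred (PS m) (good k)"
  unfolding good_def
  apply (rule pred_intros_finite(3))
   apply simp
  subgoal for l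
  proof -
    assume km: "k \<le> m" and l: "l \<in> {1..k}"
    then have l1: "l \<in> {1..m}" by simp
    have pC[measurable]: "Measurable.pred (PS m) (\<lambda>\<omega>. cp_C l \<omega> \<le> l)"
      "Measurable.pred (PS m) (\<lambda>\<omega>. cp_C l \<omega> = l)"
      by (rule pred_cnt[OF meas_C[OF l1]])+
    show ?thesis
    proof (cases "2 \<le> l")
      case True
      then have l2: "l - 1 \<in> {1..m}" using l1 by auto
      have pCC[measurable]: "Measurable.pred (PS m) (\<lambda>\<omega>. cp_C l \<omega> = cp_C (l - 1) \<omega>)"
      proof -
        have [measurable]: "\<And>c. Measurable.pred (PS m) (\<lambda>\<omega>. cp_C l \<omega> = c)"
            "\<And>c. Measurable.pred (PS m) (\<lambda>\<omega>. cp_C (l - 1) \<omega> = c)"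
          by (rule pred_cnt[OF meas_C[OF l1]] pred_cnt[OF meas_C[OF l2]])+
        have "Measurable.pred (PS m) (\<lambda>\<omega>. \<forall>c. cp_C (l - 1) \<omega> = c \<longrightarrow> cp_C l \<omega> = c)"
          by measurable
        moreover have "(\<lambda>\<omega>. \<forall>c. cp_C (l - 1) \<omega> = c \<longrightarrow> cp_C l \<omega> = c) = (\<lambda>\<omega>. cp_C l \<omega> = cp_C (l - 1) \<omega>)"
          by auto
        ultimately show ?thesis by simp
      qed
      have [measurable]: "(\<lambda>\<omega>. T (cp_X l \<omega>)) \<in> borel_measurable (PS m)"
        "(\<lambda>\<omega>. T (cp_X (l - 1) \<omega>)) \<in> borel_measurable (PS m)"
        using meas_TX[OF T_meas l1] meas_TX[OF T_meas l2] .
      have pTT[measurable]: "Measurable.pred (PS m) (\<lambda>\<omega>. T (cp_X l \<omega>) = T (cp_X (l - 1) \<omega>))"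
        unfolding pred_def by (rule borel_measurable_eq) measurable
      show ?thesis
        by (intro pred_intros_logic(3) pred_intros_imp' pred_intros_logic(5) pC pCC pTT)
    next
      case False
      show ?thesis
        by (intro pred_intros_logic(3) pred_intros_imp' pC) (use False in simp)
    qed
  qed
  done

lemma good_Suc: "good (Suc k) (fun_upd \<omega> (Suc k) s) \<longleftrightarrow> good k \<omega> \<and> fst s \<le> Suc k \<and>
   (1 \<le> k \<longrightarrow> fst s = Suc k \<or> (fst s = fst (\<omega> k) \<and> T (snd s) = T (snd (\<omega> k))))"
proof -
  define G where "G = (\<lambda>\<omega> l. cp_C l \<omega> \<le> l \<and> (2 \<le> l \<longrightarrow> (cp_C l \<omega> = l \<or>
      (cp_C l \<omega> = cp_C (l - 1) \<omega> \<and> T (cp_X l \<omega>) = T (cp_X (l - 1) \<omega>)))))"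
  have gd: "good m w = (\<forall>l\<in>{1..m}. G w l)" for m w unfolding good_def G_def by simp
  have e: "{1..Suc k} = insert (Suc k) {1..k}" by auto
  have A: "(\<forall>l\<in>{1..k}. G (fun_upd \<omega> (Suc k) s) l) = (\<forall>l\<in>{1..k}. G \<omega> l)"
  proof (rule ball_cong[OF refl])
    fix l assume l: "l \<in> {1..k}"
    then have n: "l \<noteq> Suc k" "l - 1 \<noteq> Suc k" by auto
    show "G (fun_upd \<omega> (Suc k) s) l = G \<omega> l"
      unfolding G_def cp_C_def cp_X_def fun_upd_other[OF n(1)] fun_upd_other[OF n(2)] ..
  qed
  have B: "G (fun_upd \<omega> (Suc k) s) (Suc k) = (fst s \<le> Suc k \<and>
   (1 \<le> k \<longrightarrow> fst s = Suc k \<or> (fst s = fst (\<omega> k) \<and> T (snd s) = T (snd (\<omega> k)))))"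
    unfolding G_def cp_C_def cp_X_def by simp
  have "good (Suc k) (fun_upd \<omega> (Suc k) s) = (G (fun_upd \<omega> (Suc k) s) (Suc k) \<and> (\<forall>l\<in>{1..k}. G (fun_upd \<omega> (Suc k) s) l))"
    unfolding gd e by simp
  then show ?thesis unfolding A B gd[of k \<omega>] by blast
qed

lemma pred_S: "Measurable.pred S (\<lambda>s. fst s \<le> a \<and> (b \<longrightarrow> fst s = a \<or> (fst s = c \<and> T (snd s) = t)))"
proof -
  have f[measurable]: "fst \<in> S \<rightarrow>\<^sub>M count_space UNIV" unfolding cp_S_def by simp
  have [measurable]: "(\<lambda>s. T (snd s)) \<in> borel_measurable S"
    unfolding cp_S_def using T_meas by measurable
  have p1: "Measurable.pred S (\<lambda>s. fst s \<le> a)" "Measurable.pred S (\<lambda>s. fst s = a)"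
     "Measurable.pred S (\<lambda>s. fst s = c)"
    by (rule pred_cnt[OF f])+
  have p2: "Measurable.pred S (\<lambda>s. T (snd s) = t)" by measurable
  show ?thesis
    by (intro pred_intros_logic(3) pred_intros_imp' pred_intros_logic(5) p1 p2)
qed

lemma AE_step:
  assumes "fst s0 \<le> k"
  shows "AE s in cp_step q J (Suc k) s0. fst s \<le> Suc k \<and> (True \<longrightarrow> fst s = Suc k \<or> (fst s = fst s0 \<and> T (snd s) = T (snd s0)))"
proof -
  let ?Q = "\<lambda>s. fst s \<le> Suc k \<and> (True \<longrightarrow> fst s = Suc k \<or> (fst s = fst s0 \<and> T (snd s) = T (snd s0)))"
  have np[measurable]: "Measurable.pred S (\<lambda>s. \<not> ?Q s)"
    using pred_intros_logic(2)[OF pred_S[of "Suc k" True "fst s0" "T (snd s0)"]] .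
  have "{s \<in> space S. ?Q s} \<in> sets S" using pred_S[of "Suc k" True "fst s0" "T (snd s0)"] by (simp only: pred_def)
  then have pq: "{s \<in> space (cp_step q J (Suc k) s0). ?Q s} \<in> sets (cp_step q J (Suc k) s0)"
    by (simp only: sets_cp_step sets_eq_imp_space_eq[OF sets_cp_step])
  have mi: "indicator {s. \<not> ?Q s} \<in> borel_measurable S"
    by measurable
  show ?thesis
    apply (subst AE_iff_nn_integral[OF pq])
    apply (subst nn_step[OF mi])
    using assms by (simp add: indicator_def)
qed

lemma AE_init: "AE s in cp_init q J. fst s \<le> Suc 0 \<and> (False \<longrightarrow> fst s = Suc 0 \<or> (fst s = c \<and> T (snd s) = t))"
proof -
  let ?Q = "\<lambda>s. fst s \<le> Suc 0 \<and> (False \<longrightarrow> fst s = Suc 0 \<or> (fst s = c \<and> T (snd s) = t))"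
  have np[measurable]: "Measurable.pred S (\<lambda>s. \<not> ?Q s)"
    using pred_intros_logic(2)[OF pred_S[of "Suc 0" False c t]] .
  have "{s \<in> space S. ?Q s} \<in> sets S" using pred_S[of "Suc 0" False c t] by (simp only: pred_def)
  then have pq: "{s \<in> space (cp_init q J). ?Q s} \<in> sets (cp_init q J)"
    by (simp only: sets_cp_init sets_eq_imp_space_eq[OF sets_cp_init])
  have mi: "indicator {s. \<not> ?Q s} \<in> borel_measurable S"
    by measurable
  show ?thesis
    apply (subst AE_iff_nn_integral[OF pq])
    apply (subst nn_init[OF mi])
    by (simp add: indicator_def)
qed

lemma AE_K:
  assumes g: "good k \<omega>"
  shows "AE s in K k \<omega>. fst s \<le> Suc k \<and> (1 \<le> k \<longrightarrow> fst s = Suc k \<or> (fst s = fst (\<omega> k) \<and> T (snd s) = T (snd (\<omega> k))))"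
proof (cases k)
  case 0
  have e: "K k \<omega> = cp_init q J" using 0 by (simp add: K_def)
  show ?thesis unfolding e using AE_init[of "fst (\<omega> k)" "T (snd (\<omega> k))"] 0 by simp
next
  case (Suc k')
  have "fst (\<omega> k) \<le> k" using g Suc unfolding good_def cp_C_def by auto
  have e: "K k \<omega> = cp_step q J (Suc k) (\<omega> k)" using Suc by (simp add: K_def)
  show ?thesis unfolding e using AE_step[OF \<open>fst (\<omega> k) \<le> k\<close>]
    by eventually_elim (use Suc in auto)
qed

lemma AE_good: "AE \<omega> in P k. good k \<omega>"
proof (induction k)
  case 0
  show ?case by (rule AE_I2) (simp add: good_def)
next
  case (Suc k)
  show ?case
    unfolding P_Suc
  proof (subst AE_bind[OF meas_KK' pred_good[OF order_refl]])
    show "AE \<omega> in P k. AE y in KK k \<omega>. good (Suc k) y"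
      using Suc AE_space
    proof (eventually_elim)
      case (elim \<omega>)
      then have \<omega>: "\<omega> \<in> space (PS k)" and g: "good k \<omega>" by auto
      have ps: "{x \<in> space (PS (Suc k)). good (Suc k) x} \<in> sets (PS (Suc k))"
        using pred_good[of "Suc k" "Suc k"] by (simp add: pred_def)
      show ?case
        unfolding KK_def
        apply (subst AE_distr_iff[OF meas_upd1K[OF \<omega>] ps])
        unfolding good_Suc
        using AE_K[OF g] by eventually_elim (use g in auto)
    qed
  qed
qed

definition "\<beta> c i = pmf (bernoulli_pmf (q c i)) False"

lemma K_Suc: "K (Suc j) \<omega> = cp_step q J (Suc (Suc j)) (\<omega> (Suc j))"
  by (simp add: K_def)

lemma factor_base:
  fixes h g :: "(nat \<Rightarrow> nat \<times> 'x) \<Rightarrow> ennreal"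
  assumes j: "1 \<le> j"
    and hm: "h \<in> borel_measurable (PS (Suc j))"
    and hu: "\<And>\<omega> s. h (fun_upd \<omega> (Suc j) s) = h \<omega>"
    and gm: "g \<in> borel_measurable (PS (Suc j))"
    and gz: "\<And>\<omega>. fst (\<omega> (Suc j)) \<noteq> Suc j \<Longrightarrow> g \<omega> = 0"
    and gd: "\<And>\<omega> \<omega>'. \<omega> (Suc j) = \<omega>' (Suc j) \<Longrightarrow> g \<omega> = g \<omega>'"
  shows "(\<integral>\<^sup>+\<omega>. h \<omega> * g \<omega> \<partial>P (Suc j)) =
    (\<integral>\<^sup>+\<omega>. h \<omega> * ennreal (\<beta> (cp_C j \<omega>) (Suc j)) * (\<integral>\<^sup>+x. g (\<lambda>_. (Suc j, x)) \<partial>J) \<partial>P j)"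
proof -
  obtain j' where j': "j = Suc j'" using j by (cases j) auto
  have "(\<integral>\<^sup>+\<omega>. h \<omega> * g \<omega> \<partial>P (Suc j)) =
     (\<integral>\<^sup>+\<omega>. (\<integral>\<^sup>+s. h (fun_upd \<omega> (Suc j) s) * g (fun_upd \<omega> (Suc j) s) \<partial>K j \<omega>) \<partial>P j)"
    by (rule prior_rec) (use hm gm in measurable)
  also have "\<dots> = (\<integral>\<^sup>+\<omega>. h \<omega> * ennreal (\<beta> (cp_C j \<omega>) (Suc j)) * (\<integral>\<^sup>+x. g (\<lambda>_. (Suc j, x)) \<partial>J) \<partial>P j)"
  proof (rule nn_integral_cong_AE)
    show "AE \<omega> in P j. (\<integral>\<^sup>+s. h (fun_upd \<omega> (Suc j) s) * g (fun_upd \<omega> (Suc j) s) \<partial>K j \<omega>) =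
       h \<omega> * ennreal (\<beta> (cp_C j \<omega>) (Suc j)) * (\<integral>\<^sup>+x. g (\<lambda>_. (Suc j, x)) \<partial>J)"
      using AE_good[of j] AE_space
    proof eventually_elim
      case (elim \<omega>)
      then have \<omega>: "\<omega> \<in> space (PS j)" and gw: "good j \<omega>" by auto
      have cj: "fst (\<omega> j) \<le> j" using gw j unfolding good_def cp_C_def by auto
      have gsm: "(\<lambda>s. g (fun_upd \<omega> (Suc j) s)) \<in> borel_measurable S"
        using measurable_compose[OF meas_upd1[OF \<omega>] gm] .
      have "(\<integral>\<^sup>+s. h (fun_upd \<omega> (Suc j) s) * g (fun_upd \<omega> (Suc j) s) \<partial>K j \<omega>)
          = (\<integral>\<^sup>+s. h \<omega> * g (fun_upd \<omega> (Suc j) s) \<partial>K j \<omega>)" by (simp add: hu)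
      also have "\<dots> = h \<omega> * (\<integral>\<^sup>+s. g (fun_upd \<omega> (Suc j) s) \<partial>K j \<omega>)"
        by (rule nn_integral_cmult) (simp add: gsm cong: measurable_cong_sets)
      also have "(\<integral>\<^sup>+s. g (fun_upd \<omega> (Suc j) s) \<partial>K j \<omega>) = ennreal (\<beta> (cp_C j \<omega>) (Suc j)) * (\<integral>\<^sup>+x. g (\<lambda>_. (Suc j, x)) \<partial>J)"
      proof -
        have e: "K j \<omega> = cp_step q J (Suc j) (\<omega> j)" using j' by (simp add: K_def)
        have g0: "g (fun_upd \<omega> (Suc j) (\<omega> j)) = 0" using cj by (intro gz) simp
        have g1: "g (fun_upd \<omega> (Suc j) (Suc j, x)) = g (\<lambda>_. (Suc j, x))" for x by (rule gd) simp
        show ?thesis unfolding e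
          by (subst nn_step[OF gsm]) (simp add: g0 g1 \<beta>_def cp_C_def)
      qed
      finally show ?case by (simp only: mult.assoc)
    qed
  qed
  finally show ?thesis .
qed

lemma factor:
  assumes j: "1 \<le> j" and n: "Suc j \<le> n"
  shows "\<forall>g. g \<in> borel_measurable (PS n) \<and> (\<forall>\<omega> \<omega>'. (\<forall>l\<in>{Suc j..n}. \<omega> l = \<omega>' l) \<longrightarrow> g \<omega> = g \<omega>')
      \<and> (\<forall>\<omega>. fst (\<omega> (Suc j)) \<noteq> Suc j \<longrightarrow> g \<omega> = 0) \<longrightarrow>
     (\<exists>R. \<forall>h. (\<forall>m. Suc j \<le> m \<longrightarrow> h \<in> borel_measurable (PS m)) \<and> (\<forall>\<omega> m s. j < m \<longrightarrow> h (fun_upd \<omega> m s) = h \<omega>) \<longrightarrow>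
        (\<integral>\<^sup>+\<omega>. h \<omega> * g \<omega> \<partial>P n) = (\<integral>\<^sup>+\<omega>. h \<omega> * ennreal (\<beta> (cp_C j \<omega>) (Suc j)) * R \<partial>P j))"
  using n
proof (induction n rule: dec_induct)
  case base
  show ?case
  proof (intro allI impI, elim conjE)
    fix g :: "_ \<Rightarrow> ennreal"
    assume gm: "g \<in> borel_measurable (PS (Suc j))"
      and gd: "\<forall>\<omega> \<omega>'. (\<forall>l\<in>{Suc j..Suc j}. \<omega> l = \<omega>' l) \<longrightarrow> g \<omega> = g \<omega>'"
      and gz: "\<forall>\<omega>. fst (\<omega> (Suc j)) \<noteq> Suc j \<longrightarrow> g \<omega> = 0"
    show "\<exists>R. \<forall>h. (\<forall>m. Suc j \<le> m \<longrightarrow> h \<in> borel_measurable (PS m)) \<and> (\<forall>\<omega> m s. j < m \<longrightarrow> h (fun_upd \<omega> m s) = h \<omega>) \<longrightarrow>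
        (\<integral>\<^sup>+\<omega>. h \<omega> * g \<omega> \<partial>P (Suc j)) = (\<integral>\<^sup>+\<omega>. h \<omega> * ennreal (\<beta> (cp_C j \<omega>) (Suc j)) * R \<partial>P j)"
    proof (intro exI allI impI, elim conjE)
      fix h :: "_ \<Rightarrow> ennreal"
      assume hm: "\<forall>m. Suc j \<le> m \<longrightarrow> h \<in> borel_measurable (PS m)"
        and hu: "\<forall>\<omega> m s. j < m \<longrightarrow> h (fun_upd \<omega> m s) = h \<omega>"
      show "(\<integral>\<^sup>+\<omega>. h \<omega> * g \<omega> \<partial>P (Suc j)) = (\<integral>\<^sup>+\<omega>. h \<omega> * ennreal (\<beta> (cp_C j \<omega>) (Suc j)) * (\<integral>\<^sup>+x. g (\<lambda>_. (Suc j, x)) \<partial>J) \<partial>P j)"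
        apply (rule factor_base[OF j])
            apply (rule hm[rule_format], simp)
           apply (rule hu[rule_format], simp)
          apply (rule gm)
         apply (rule gz[rule_format], simp)
        apply (rule gd[rule_format], simp)
        done
    qed
  qed
next
  case (step n)
  show ?case
  proof (intro allI impI, elim conjE)
    fix g :: "_ \<Rightarrow> ennreal"
    assume gm: "g \<in> borel_measurable (PS (Suc n))"
      and gd: "\<forall>\<omega> \<omega>'. (\<forall>l\<in>{Suc j..Suc n}. \<omega> l = \<omega>' l) \<longrightarrow> g \<omega> = g \<omega>'"
      and gz: "\<forall>\<omega>. fst (\<omega> (Suc j)) \<noteq> Suc j \<longrightarrow> g \<omega> = 0"
    define g' where "g' \<omega> = (\<integral>\<^sup>+s. g (fun_upd \<omega> (Suc n) s) \<partial>K n \<omega>)" for \<omega>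
    have gm2: "(\<lambda>(\<omega>, s). g (fun_upd \<omega> (Suc n) s)) \<in> borel_measurable (PS n \<Otimes>\<^sub>M S)"
      using measurable_compose[OF meas_upd gm] by (simp add: case_prod_beta')
    have g'm: "g' \<in> borel_measurable (PS n)"
      unfolding g'_def[abs_def]
      by (rule nn_integral_measurable_subprob_algebra2[OF gm2 meas_K])
    have n0: "n \<noteq> 0" using step j by auto
    have g'd: "\<forall>\<omega> \<omega>'. (\<forall>l\<in>{Suc j..n}. \<omega> l = \<omega>' l) \<longrightarrow> g' \<omega> = g' \<omega>'"
    proof (intro allI impI)
      fix \<omega> \<omega>' :: "nat \<Rightarrow> nat \<times> 'x" assume a: "\<forall>l\<in>{Suc j..n}. \<omega> l = \<omega>' l"
      then have "\<omega> n = \<omega>' n" using step by auto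
      then have eK: "K n \<omega> = K n \<omega>'" by (simp add: K_def)
      have "g (fun_upd \<omega> (Suc n) s) = g (fun_upd \<omega>' (Suc n) s)" for s
      proof -
        have "\<forall>l\<in>{Suc j..Suc n}. (fun_upd \<omega> (Suc n) s) l = (fun_upd \<omega>' (Suc n) s) l"
          using a by (auto simp: le_Suc_eq)
        then show ?thesis using gd by blast
      qed
      then show "g' \<omega> = g' \<omega>'" unfolding g'_def eK by simp
    qed
    have g'z: "\<forall>\<omega>. fst (\<omega> (Suc j)) \<noteq> Suc j \<longrightarrow> g' \<omega> = 0"
    proof (intro allI impI)
      fix \<omega> :: "nat \<Rightarrow> nat \<times> 'x" assume a: "fst (\<omega> (Suc j)) \<noteq> Suc j"
      have "Suc j \<noteq> Suc n" using step by auto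
      then have "g (fun_upd \<omega> (Suc n) s) = 0" for s using gz a by simp
      then show "g' \<omega> = 0" unfolding g'_def by simp
    qed
    obtain R where R: "\<And>h. (\<forall>m. Suc j \<le> m \<longrightarrow> h \<in> borel_measurable (PS m)) \<and> (\<forall>\<omega> m s. j < m \<longrightarrow> h (fun_upd \<omega> m s) = h \<omega>) \<Longrightarrow>
        (\<integral>\<^sup>+\<omega>. h \<omega> * g' \<omega> \<partial>P n) = (\<integral>\<^sup>+\<omega>. h \<omega> * ennreal (\<beta> (cp_C j \<omega>) (Suc j)) * R \<partial>P j)"
      using step.IH g'm g'd g'z by blast
    show "\<exists>R. \<forall>h. (\<forall>m. Suc j \<le> m \<longrightarrow> h \<in> borel_measurable (PS m)) \<and> (\<forall>\<omega> m s. j < m \<longrightarrow> h (fun_upd \<omega> m s) = h \<omega>) \<longrightarrow>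
        (\<integral>\<^sup>+\<omega>. h \<omega> * g \<omega> \<partial>P (Suc n)) = (\<integral>\<^sup>+\<omega>. h \<omega> * ennreal (\<beta> (cp_C j \<omega>) (Suc j)) * R \<partial>P j)"
    proof (intro exI[of _ R] allI impI, elim conjE)
      fix h :: "_ \<Rightarrow> ennreal"
      assume hm: "\<forall>m. Suc j \<le> m \<longrightarrow> h \<in> borel_measurable (PS m)"
        and hu: "\<forall>\<omega> m s. j < m \<longrightarrow> h (fun_upd \<omega> m s) = h \<omega>"
      have hmn: "h \<in> borel_measurable (PS (Suc n))" by (rule hm[rule_format]) (use step in simp)
      have "(\<integral>\<^sup>+\<omega>. h \<omega> * g \<omega> \<partial>P (Suc n)) =
         (\<integral>\<^sup>+\<omega>. (\<integral>\<^sup>+s. h (fun_upd \<omega> (Suc n) s) * g (fun_upd \<omega> (Suc n) s) \<partial>K n \<omega>) \<partial>P n)"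
        by (rule prior_rec) (use hmn gm in measurable)
      also have "\<dots> = (\<integral>\<^sup>+\<omega>. h \<omega> * g' \<omega> \<partial>P n)"
      proof (rule nn_integral_cong)
        fix \<omega> assume "\<omega> \<in> space (P n)"
        then have \<omega>: "\<omega> \<in> space (PS n)" by simp
        have gsm: "(\<lambda>s. g (fun_upd \<omega> (Suc n) s)) \<in> borel_measurable (K n \<omega>)"
          using measurable_compose[OF meas_upd1[OF \<omega>] gm] by (simp cong: measurable_cong_sets)
        have hh: "h (fun_upd \<omega> (Suc n) s) = h \<omega>" for s by (rule hu[rule_format]) (use step in simp)
        show "(\<integral>\<^sup>+s. h (fun_upd \<omega> (Suc n) s) * g (fun_upd \<omega> (Suc n) s) \<partial>K n \<omega>) = h \<omega> * g' \<omega>"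
          unfolding hh g'_def by (rule nn_integral_cmult[OF gsm])
      qed
      also have "\<dots> = (\<integral>\<^sup>+\<omega>. h \<omega> * ennreal (\<beta> (cp_C j \<omega>) (Suc j)) * R \<partial>P j)"
        by (rule R[OF conjI[OF hm hu]])
      finally show "(\<integral>\<^sup>+\<omega>. h \<omega> * g \<omega> \<partial>P (Suc n)) = (\<integral>\<^sup>+\<omega>. h \<omega> * ennreal (\<beta> (cp_C j \<omega>) (Suc j)) * R \<partial>P j)" .
    qed
  qed
qed

abbreviation "IC l c \<omega> \<equiv> (indicator {\<omega>. cp_C l \<omega> = c} \<omega> :: real)"

lemma C_upd[simp]: "m \<noteq> l \<Longrightarrow> cp_C l (fun_upd \<omega> m s) = cp_C l \<omega>"
  by (simp add: cp_C_def)
lemma X_upd[simp]: "m \<noteq> l \<Longrightarrow> cp_X l (fun_upd \<omega> m s) = cp_X l \<omega>"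
  by (simp add: cp_X_def)
lemma IC_upd: "m \<noteq> l \<Longrightarrow> IC l c (fun_upd \<omega> m s) = IC l c \<omega>"
  by (simp add: indicator_def)
lemma lik_upd: "j < m \<Longrightarrow> cp_lik p y j (fun_upd \<omega> m s) = cp_lik p y j \<omega>"
  unfolding cp_lik_def by (intro prod.cong) auto

lemma I_base:
  fixes hR :: "_ \<Rightarrow> real"
  assumes j: "1 \<le> j" and n: "Suc j \<le> n"
    and hm: "\<And>m. j \<le> m \<Longrightarrow> hR \<in> borel_measurable (PS m)"
    and hu: "\<And>\<omega> m s. j < m \<Longrightarrow> hR (fun_upd \<omega> m s) = hR \<omega>"
  shows "(\<integral>\<^sup>+\<omega>. ennreal (hR \<omega> * IC (Suc j) (Suc j) \<omega>) \<partial>P n) =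
     (\<integral>\<^sup>+\<omega>. ennreal (hR \<omega>) * ennreal (\<beta> (cp_C j \<omega>) (Suc j)) \<partial>P j)"
proof -
  have "(\<integral>\<^sup>+\<omega>. ennreal (hR \<omega> * IC (Suc j) (Suc j) \<omega>) \<partial>P n) =
     (\<integral>\<^sup>+\<omega>. ennreal (hR \<omega> * IC (Suc j) (Suc j) \<omega>) \<partial>P (Suc j))"
  proof (rule marg[OF n])
    fix m assume m: "Suc j \<le> m"
    have [measurable]: "hR \<in> borel_measurable (PS m)" by (rule hm) (use m in simp)
    have [measurable]: "(\<lambda>\<omega>. IC (Suc j) (Suc j) \<omega>) \<in> borel_measurable (PS m)"
      by (rule meas_indC) (use m in simp)
    show "(\<lambda>\<omega>. ennreal (hR \<omega> * IC (Suc j) (Suc j) \<omega>)) \<in> borel_measurable (PS m)"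
      by measurable
  next
    fix \<omega> m s assume "Suc j < m"
    then show "ennreal (hR (fun_upd \<omega> m s) * IC (Suc j) (Suc j) (fun_upd \<omega> m s)) = ennreal (hR \<omega> * IC (Suc j) (Suc j) \<omega>)"
      by (simp add: hu IC_upd)
  qed
  also have "\<dots> = (\<integral>\<^sup>+\<omega>. ennreal (hR \<omega>) * ennreal (IC (Suc j) (Suc j) \<omega>) \<partial>P (Suc j))"
    by (simp add: ennreal_mult'')
  also have "\<dots> = (\<integral>\<^sup>+\<omega>. ennreal (hR \<omega>) * ennreal (\<beta> (cp_C j \<omega>) (Suc j)) *
      (\<integral>\<^sup>+x. ennreal (IC (Suc j) (Suc j) (\<lambda>_. (Suc j, x))) \<partial>J) \<partial>P j)"
  proof (rule factor_base[OF j])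
    have [measurable]: "hR \<in> borel_measurable (PS (Suc j))" by (rule hm) simp
    have [measurable]: "(\<lambda>\<omega>. IC (Suc j) (Suc j) \<omega>) \<in> borel_measurable (PS (Suc j))"
      by (rule meas_indC) simp
    show "(\<lambda>\<omega>. ennreal (hR \<omega>)) \<in> borel_measurable (PS (Suc j))" by measurable
    show "(\<lambda>\<omega>. ennreal (IC (Suc j) (Suc j) \<omega>)) \<in> borel_measurable (PS (Suc j))"
      by measurable
  qed (auto simp: hu cp_C_def indicator_def)
  also have "\<dots> = (\<integral>\<^sup>+\<omega>. ennreal (hR \<omega>) * ennreal (\<beta> (cp_C j \<omega>) (Suc j)) \<partial>P j)"
    by (simp add: cp_C_def prob_J_1)
  finally show ?thesis .
qed

definition "rest j n \<omega> = (\<Prod>l\<in>{Suc j..n}. p (cp_X l \<omega>) (y l))"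

lemma rest_nonneg: "0 \<le> rest j n \<omega>"
  unfolding rest_def by (simp add: prod_nonneg p_nonneg)

lemma meas_rest: "n \<le> m \<Longrightarrow> rest j n \<in> borel_measurable (PS m)"
  unfolding rest_def[abs_def]
  by (rule borel_measurable_prod, rule meas_pX) auto

lemma I_gen:
  assumes j: "1 \<le> j" and n: "Suc j \<le> n"
  shows "\<exists>R. \<forall>hR::_\<Rightarrow>real. (\<forall>m. j \<le> m \<longrightarrow> hR \<in> borel_measurable (PS m)) \<and> (\<forall>\<omega> m s. j < m \<longrightarrow> hR (fun_upd \<omega> m s) = hR \<omega>) \<longrightarrow>
    (\<integral>\<^sup>+\<omega>. ennreal (hR \<omega> * IC (Suc j) (Suc j) \<omega> * rest j n \<omega>) \<partial>P n) =
    (\<integral>\<^sup>+\<omega>. ennreal (hR \<omega>) * ennreal (\<beta> (cp_C j \<omega>) (Suc j)) * R \<partial>P j)"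
proof -
  define g where "g \<omega> = ennreal (IC (Suc j) (Suc j) \<omega> * rest j n \<omega>)" for \<omega>
  have gm: "g \<in> borel_measurable (PS n)"
  proof -
    have [measurable]: "(\<lambda>\<omega>. IC (Suc j) (Suc j) \<omega>) \<in> borel_measurable (PS n)"
      by (rule meas_indC) (use n in simp)
    have [measurable]: "rest j n \<in> borel_measurable (PS n)" by (rule meas_rest) simp
    show ?thesis unfolding g_def[abs_def] by measurable
  qed
  have gd: "\<forall>\<omega> \<omega>'. (\<forall>l\<in>{Suc j..n}. \<omega> l = \<omega>' l) \<longrightarrow> g \<omega> = g \<omega>'"
  proof (intro allI impI)
    fix \<omega> \<omega>' :: "nat \<Rightarrow> nat \<times> 'x" assume a: "\<forall>l\<in>{Suc j..n}. \<omega> l = \<omega>' l"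
    then have "\<omega> (Suc j) = \<omega>' (Suc j)" using n by auto
    then have 1: "IC (Suc j) (Suc j) \<omega> = IC (Suc j) (Suc j) \<omega>'" by (simp add: cp_C_def indicator_def)
    have 2: "rest j n \<omega> = rest j n \<omega>'" unfolding rest_def cp_X_def
      by (rule prod.cong) (use a in auto)
    show "g \<omega> = g \<omega>'" unfolding g_def 1 2 ..
  qed
  have gz: "\<forall>\<omega>. fst (\<omega> (Suc j)) \<noteq> Suc j \<longrightarrow> g \<omega> = 0"
    by (simp add: g_def cp_C_def indicator_def)
  obtain R where R: "\<And>h. (\<forall>m. Suc j \<le> m \<longrightarrow> h \<in> borel_measurable (PS m)) \<and> (\<forall>\<omega> m s. j < m \<longrightarrow> h (fun_upd \<omega> m s) = h \<omega>) \<Longrightarrow>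
        (\<integral>\<^sup>+\<omega>. h \<omega> * g \<omega> \<partial>P n) = (\<integral>\<^sup>+\<omega>. h \<omega> * ennreal (\<beta> (cp_C j \<omega>) (Suc j)) * R \<partial>P j)"
    using factor[OF j n] gm gd gz by blast
  show ?thesis
  proof (intro exI[of _ R] allI impI, elim conjE)
    fix hR :: "_ \<Rightarrow> real"
    assume hm: "\<forall>m. j \<le> m \<longrightarrow> hR \<in> borel_measurable (PS m)"
      and hu: "\<forall>\<omega> m s. j < m \<longrightarrow> hR (fun_upd \<omega> m s) = hR \<omega>"
    have hm': "\<forall>m. Suc j \<le> m \<longrightarrow> (\<lambda>\<omega>. ennreal (hR \<omega>)) \<in> borel_measurable (PS m)"
    proof (intro allI impI)
      fix m assume "Suc j \<le> m"
      then have [measurable]: "hR \<in> borel_measurable (PS m)" using hm by simp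
      show "(\<lambda>\<omega>. ennreal (hR \<omega>)) \<in> borel_measurable (PS m)" by measurable
    qed
    have hu': "\<forall>\<omega> m s. j < m \<longrightarrow> ennreal (hR (fun_upd \<omega> m s)) = ennreal (hR \<omega>)"
      using hu by simp
    have "(\<integral>\<^sup>+\<omega>. ennreal (hR \<omega> * IC (Suc j) (Suc j) \<omega> * rest j n \<omega>) \<partial>P n) =
       (\<integral>\<^sup>+\<omega>. ennreal (hR \<omega>) * g \<omega> \<partial>P n)"
      unfolding g_def mult.assoc
      by (intro nn_integral_cong) (simp add: ennreal_mult'' rest_nonneg)
    also have "\<dots> = (\<integral>\<^sup>+\<omega>. ennreal (hR \<omega>) * ennreal (\<beta> (cp_C j \<omega>) (Suc j)) * R \<partial>P j)"
      by (rule R[OF conjI[OF hm' hu']])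
    finally show "(\<integral>\<^sup>+\<omega>. ennreal (hR \<omega> * IC (Suc j) (Suc j) \<omega> * rest j n \<omega>) \<partial>P n) =
       (\<integral>\<^sup>+\<omega>. ennreal (hR \<omega>) * ennreal (\<beta> (cp_C j \<omega>) (Suc j)) * R \<partial>P j)" .
  qed
qed

end

locale cpm3 = cpm2 q J p y T for q and J :: "'x::topological_space measure" and p :: "'x \<Rightarrow> 'y \<Rightarrow> real" and y T +
  fixes n i :: nat
  assumes i1: "1 \<le> i" and inn: "i \<le> n"
    and T_int: "\<And>j. i \<le> j \<Longrightarrow> j \<le> n \<Longrightarrow> integrable (cp_H q J p y n i j) T"
begin

definition "Bj j = (\<integral>\<omega>. IC j i \<omega> * cp_lik p y j \<omega> \<partial>P n)"
definition "aj j = (\<integral>\<omega>. IC j i \<omega> * cp_lik p y j \<omega> * T (cp_X j \<omega>) \<partial>P n)"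

lemma meas_P: "f \<in> borel_measurable (PS n) \<Longrightarrow> f \<in> borel_measurable (P n)"
  by (simp cong: measurable_cong_sets)

lemma meas_Pk: "f \<in> borel_measurable (PS k) \<Longrightarrow> f \<in> borel_measurable (P k)"
  by (simp cong: measurable_cong_sets)

lemma meas_w: "j \<in> {1..m} \<Longrightarrow> (\<lambda>\<omega>. IC j i \<omega> * cp_lik p y j \<omega>) \<in> borel_measurable (PS m)"
proof -
  assume j: "j \<in> {1..m}"
  have [measurable]: "(\<lambda>\<omega>. IC j i \<omega>) \<in> borel_measurable (PS m)" by (rule meas_indC[OF j])
  have [measurable]: "cp_lik p y j \<in> borel_measurable (PS m)" by (rule meas_lik) (use j in simp)
  show ?thesis by measurable
qed

lemma Bj_nonneg: "0 \<le> Bj j"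
  unfolding Bj_def by (intro integral_nonneg_AE AE_I2) (simp add: lik_nonneg)

lemma HT:
  assumes j: "j \<in> {1..n}"
  shows "(\<integral>x. T x \<partial>cp_H q J p y n i j) = aj j / Bj j"
proof -
  define g where "g \<omega> = IC j i \<omega> * cp_lik p y j \<omega> / Bj j" for \<omega>
  have gm: "g \<in> borel_measurable (P n)"
    unfolding g_def[abs_def] using meas_P[OF meas_w[OF j]] by measurable
  have gnn: "AE \<omega> in P n. 0 \<le> g \<omega>"
    by (rule AE_I2) (simp add: g_def lik_nonneg Bj_nonneg)
  have H: "cp_H q J p y n i j = distr (density (P n) g) borel (cp_X j)"
    unfolding cp_H_def g_def Bj_def ..
  have Xm: "cp_X j \<in> density (P n) g \<rightarrow>\<^sub>M borel"
    using meas_X[OF j] by (simp cong: measurable_cong_sets)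
  have TXm: "(\<lambda>\<omega>. T (cp_X j \<omega>)) \<in> borel_measurable (P n)"
    using meas_P[OF meas_TX[OF T_meas j]] .
  have "(\<integral>x. T x \<partial>cp_H q J p y n i j) = (\<integral>\<omega>. T (cp_X j \<omega>) \<partial>density (P n) g)"
    unfolding H by (rule integral_distr[OF Xm T_meas])
  also have "\<dots> = (\<integral>\<omega>. g \<omega> *\<^sub>R T (cp_X j \<omega>) \<partial>P n)"
    by (rule integral_density[OF TXm gm gnn])
  also have "\<dots> = aj j / Bj j"
    unfolding aj_def g_def by simp
  finally show ?thesis .
qed

lemma int_a:
  assumes j: "i \<le> j" "j \<le> n" and B: "Bj j \<noteq> 0"
  shows "integrable (P n) (\<lambda>\<omega>. IC j i \<omega> * cp_lik p y j \<omega> * T (cp_X j \<omega>))"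
proof -
  have j1: "j \<in> {1..n}" using j i1 by simp
  define g where "g \<omega> = IC j i \<omega> * cp_lik p y j \<omega> / Bj j" for \<omega>
  have gm: "g \<in> borel_measurable (P n)"
    unfolding g_def[abs_def] using meas_P[OF meas_w[OF j1]] by measurable
  have gnn: "AE \<omega> in P n. 0 \<le> g \<omega>"
    by (rule AE_I2) (simp add: g_def lik_nonneg Bj_nonneg)
  have H: "cp_H q J p y n i j = distr (density (P n) g) borel (cp_X j)"
    unfolding cp_H_def g_def Bj_def ..
  have Xm: "cp_X j \<in> density (P n) g \<rightarrow>\<^sub>M borel"
    using meas_X[OF j1] by (simp cong: measurable_cong_sets)
  have TXm: "(\<lambda>\<omega>. T (cp_X j \<omega>)) \<in> borel_measurable (P n)"
    using meas_P[OF meas_TX[OF T_meas j1]] .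
  have "integrable (density (P n) g) (\<lambda>\<omega>. T (cp_X j \<omega>))"
    using T_int[OF j] unfolding H by (subst (asm) integrable_distr_eq[OF Xm T_meas])
  then have "integrable (P n) (\<lambda>\<omega>. g \<omega> *\<^sub>R T (cp_X j \<omega>))"
    by (subst (asm) integrable_density[OF TXm gm gnn])
  then have "integrable (P n) (\<lambda>\<omega>. Bj j * (g \<omega> * T (cp_X j \<omega>)))" by simp
  then show ?thesis unfolding g_def using B by simp
qed

definition "hf f j \<omega> = f (cp_X j \<omega>) * IC j i \<omega> * cp_lik p y j \<omega>"

lemma hf_meas: "f \<in> borel_measurable borel \<Longrightarrow> 1 \<le> j \<Longrightarrow> j \<le> m \<Longrightarrow> hf f j \<in> borel_measurable (PS m)"
proof -
  assume f: "f \<in> borel_measurable borel" and j: "1 \<le> j" "j \<le> m"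
  then have j1: "j \<in> {1..m}" by simp
  have [measurable]: "(\<lambda>\<omega>. f (cp_X j \<omega>)) \<in> borel_measurable (PS m)" by (rule meas_TX[OF f j1])
  have [measurable]: "(\<lambda>\<omega>. IC j i \<omega>) \<in> borel_measurable (PS m)" by (rule meas_indC[OF j1])
  have [measurable]: "cp_lik p y j \<in> borel_measurable (PS m)" by (rule meas_lik) (use j in simp)
  show ?thesis unfolding hf_def[abs_def] by measurable
qed

lemma hf_upd: "j < m \<Longrightarrow> hf f j (fun_upd \<omega> m s) = hf f j \<omega>"
  unfolding hf_def by (simp add: IC_upd lik_upd)

lemma hf_beta: "ennreal (hf f j \<omega>) * ennreal (\<beta> (cp_C j \<omega>) (Suc j)) = ennreal (hf f j \<omega>) * ennreal (\<beta> i (Suc j))"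
  unfolding hf_def by (cases "cp_C j \<omega> = i") auto

lemma hf_marg: "f \<in> borel_measurable borel \<Longrightarrow> 1 \<le> j \<Longrightarrow> j \<le> n \<Longrightarrow>
   (\<integral>\<^sup>+\<omega>. ennreal (hf f j \<omega>) \<partial>P n) = (\<integral>\<^sup>+\<omega>. ennreal (hf f j \<omega>) \<partial>P j)"
proof (rule marg)
  fix m assume "f \<in> borel_measurable borel" "1 \<le> j" "j \<le> m"
  then have [measurable]: "hf f j \<in> borel_measurable (PS m)" by (rule hf_meas)
  show "(\<lambda>\<omega>. ennreal (hf f j \<omega>)) \<in> borel_measurable (PS m)" by measurable
qed (simp_all add: hf_upd)

lemma D_eq:
  assumes f: "f \<in> borel_measurable borel" and j: "1 \<le> j" "Suc j \<le> n"
  shows "(\<integral>\<^sup>+\<omega>. ennreal (hf f j \<omega> * IC (Suc j) (Suc j) \<omega>) \<partial>P n) = ennreal (\<beta> i (Suc j)) * (\<integral>\<^sup>+\<omega>. ennreal (hf f j \<omega>) \<partial>P n)"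
proof -
  have "(\<integral>\<^sup>+\<omega>. ennreal (hf f j \<omega> * IC (Suc j) (Suc j) \<omega>) \<partial>P n) =
     (\<integral>\<^sup>+\<omega>. ennreal (hf f j \<omega>) * ennreal (\<beta> (cp_C j \<omega>) (Suc j)) \<partial>P j)"
    by (rule I_base[OF j(1) j(2) hf_meas[OF f j(1)] hf_upd])
  also have "\<dots> = (\<integral>\<^sup>+\<omega>. ennreal (hf f j \<omega>) * ennreal (\<beta> i (Suc j)) \<partial>P j)"
    by (simp only: hf_beta)
  also have "\<dots> = (\<integral>\<^sup>+\<omega>. ennreal (hf f j \<omega>) \<partial>P j) * ennreal (\<beta> i (Suc j))"
  proof (rule nn_integral_multc)
    have [measurable]: "hf f j \<in> borel_measurable (PS j)" by (rule hf_meas[OF f j(1)]) simp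
    show "(\<lambda>\<omega>. ennreal (hf f j \<omega>)) \<in> borel_measurable (P j)" by (rule meas_Pk) measurable
  qed
  also have "\<dots> = ennreal (\<beta> i (Suc j)) * (\<integral>\<^sup>+\<omega>. ennreal (hf f j \<omega>) \<partial>P n)"
    using hf_marg[OF f j(1)] j by (simp add: mult.commute)
  finally show ?thesis .
qed

definition "E' j = (\<integral>\<^sup>+\<omega>. ennreal (cp_lik p y j \<omega>) * ennreal (\<beta> (cp_C j \<omega>) (Suc j)) \<partial>P j)"

lemma E_eq:
  assumes j: "1 \<le> j" "Suc j \<le> n"
  shows "(\<integral>\<^sup>+\<omega>. ennreal (cp_lik p y j \<omega> * IC (Suc j) (Suc j) \<omega>) \<partial>P n) = E' j"
  unfolding E'_def
  by (rule I_base[OF j(1) j(2) meas_lik lik_upd])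

lemma FG:
  assumes j: "1 \<le> j" "Suc j \<le> n"
  shows "\<exists>R. (\<integral>\<^sup>+\<omega>. ennreal (cp_lik p y j \<omega> * IC (Suc j) (Suc j) \<omega> * rest j n \<omega>) \<partial>P n) = E' j * R
     \<and> (\<forall>f. f \<in> borel_measurable borel \<longrightarrow>
        (\<integral>\<^sup>+\<omega>. ennreal (hf f j \<omega> * IC (Suc j) (Suc j) \<omega> * rest j n \<omega>) \<partial>P n) =
        ennreal (\<beta> i (Suc j)) * (\<integral>\<^sup>+\<omega>. ennreal (hf f j \<omega>) \<partial>P n) * R)"
proof -
  obtain R where R: "\<And>hR::_\<Rightarrow>real. (\<forall>m. j \<le> m \<longrightarrow> hR \<in> borel_measurable (PS m)) \<and> (\<forall>\<omega> m s. j < m \<longrightarrow> hR (fun_upd \<omega> m s) = hR \<omega>) \<Longrightarrow>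
    (\<integral>\<^sup>+\<omega>. ennreal (hR \<omega> * IC (Suc j) (Suc j) \<omega> * rest j n \<omega>) \<partial>P n) =
    (\<integral>\<^sup>+\<omega>. ennreal (hR \<omega>) * ennreal (\<beta> (cp_C j \<omega>) (Suc j)) * R \<partial>P j)"
    using I_gen[OF j] by blast
  have 1: "(\<integral>\<^sup>+\<omega>. ennreal (cp_lik p y j \<omega> * IC (Suc j) (Suc j) \<omega> * rest j n \<omega>) \<partial>P n) = E' j * R"
  proof -
    have "(\<integral>\<^sup>+\<omega>. ennreal (cp_lik p y j \<omega> * IC (Suc j) (Suc j) \<omega> * rest j n \<omega>) \<partial>P n) =
      (\<integral>\<^sup>+\<omega>. ennreal (cp_lik p y j \<omega>) * ennreal (\<beta> (cp_C j \<omega>) (Suc j)) * R \<partial>P j)"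
      apply (rule R) apply (intro conjI allI impI) apply (erule meas_lik) apply (erule lik_upd) done
    also have "\<dots> = E' j * R" unfolding E'_def
    proof (rule nn_integral_multc)
      have [measurable]: "cp_lik p y j \<in> borel_measurable (PS j)" by (rule meas_lik) simp
      have c: "cp_C j \<in> PS j \<rightarrow>\<^sub>M count_space UNIV" by (rule meas_C) (use j in simp)
      have b: "(\<lambda>c. \<beta> c (Suc j)) \<in> count_space UNIV \<rightarrow>\<^sub>M borel" by simp
      have [measurable]: "(\<lambda>\<omega>. \<beta> (cp_C j \<omega>) (Suc j)) \<in> borel_measurable (PS j)"
        using measurable_compose[OF c b] .
      show "(\<lambda>\<omega>. ennreal (cp_lik p y j \<omega>) * ennreal (\<beta> (cp_C j \<omega>) (Suc j))) \<in> borel_measurable (P j)"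
        by (rule meas_Pk) measurable
    qed
    finally show ?thesis .
  qed
  have 2: "(\<integral>\<^sup>+\<omega>. ennreal (hf f j \<omega> * IC (Suc j) (Suc j) \<omega> * rest j n \<omega>) \<partial>P n) =
        ennreal (\<beta> i (Suc j)) * (\<integral>\<^sup>+\<omega>. ennreal (hf f j \<omega>) \<partial>P n) * R"
    if f: "f \<in> borel_measurable borel" for f
  proof -
    have "(\<integral>\<^sup>+\<omega>. ennreal (hf f j \<omega> * IC (Suc j) (Suc j) \<omega> * rest j n \<omega>) \<partial>P n) =
      (\<integral>\<^sup>+\<omega>. ennreal (hf f j \<omega>) * ennreal (\<beta> (cp_C j \<omega>) (Suc j)) * R \<partial>P j)"
      apply (rule R) apply (intro conjI allI impI) apply (erule hf_meas[OF f j(1)]) apply (erule hf_upd) done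
    also have "\<dots> = (\<integral>\<^sup>+\<omega>. ennreal (hf f j \<omega>) * (ennreal (\<beta> i (Suc j)) * R) \<partial>P j)"
      by (simp only: hf_beta mult.assoc)
    also have "\<dots> = (\<integral>\<^sup>+\<omega>. ennreal (hf f j \<omega>) \<partial>P j) * (ennreal (\<beta> i (Suc j)) * R)"
    proof (rule nn_integral_multc)
      have [measurable]: "hf f j \<in> borel_measurable (PS j)" by (rule hf_meas[OF f j(1)]) simp
      show "(\<lambda>\<omega>. ennreal (hf f j \<omega>)) \<in> borel_measurable (P j)" by (rule meas_Pk) measurable
    qed
    also have "\<dots> = ennreal (\<beta> i (Suc j)) * (\<integral>\<^sup>+\<omega>. ennreal (hf f j \<omega>) \<partial>P n) * R"
      using hf_marg[OF f j(1)] j by (simp add: ac_simps)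
    finally show ?thesis .
  qed
  show ?thesis using 1 2 by blast
qed

lemma beta_nonneg: "0 \<le> \<beta> c k" unfolding \<beta>_def by simp

lemma enn_pos: "0 \<le> r \<Longrightarrow> ennreal (t * r) = ennreal (max t 0 * r)"
  by (cases "0 \<le> t") (auto simp: max_def ennreal_neg mult_nonpos_nonneg intro: ennreal_neg)
lemma enn_neg: "0 \<le> r \<Longrightarrow> ennreal (- (t * r)) = ennreal (max (- t) 0 * r)"
  by (cases "0 \<le> t") (auto simp: max_def ennreal_neg mult_nonpos_nonneg intro: ennreal_neg)
lemma enn_abs: "0 \<le> r \<Longrightarrow> ennreal \<bar>t * r\<bar> = ennreal (\<bar>t\<bar> * r)"
  by (simp add: abs_mult)

lemma AE_zero_of_nn:
  fixes f :: "_ \<Rightarrow> real"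
  assumes "f \<in> borel_measurable M" "(\<integral>\<^sup>+x. ennreal \<bar>f x\<bar> \<partial>M) = 0"
  shows "AE x in M. f x = 0"
proof -
  have "AE x in M. ennreal \<bar>f x\<bar> = 0"
    using assms by (subst nn_integral_0_iff_AE[symmetric]) auto
  then show ?thesis by eventually_elim simp
qed

lemma zero_int:
  fixes f :: "_ \<Rightarrow> real"
  assumes "f \<in> borel_measurable M" "(\<integral>\<^sup>+x. ennreal \<bar>f x\<bar> \<partial>M) = 0"
  shows "integrable M f \<and> integral\<^sup>L M f = 0"
proof -
  have ae: "AE x in M. f x = 0" by (rule AE_zero_of_nn[OF assms])
  have "integrable M f = integrable M (\<lambda>_. 0::real)"
    by (rule integrable_cong_AE) (use assms ae in auto)
  moreover have "integral\<^sup>L M f = integral\<^sup>L M (\<lambda>_. 0::real)"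
    by (rule integral_cong_AE) (use assms ae in auto)
  ultimately show ?thesis by simp
qed

lemma int_nn:
  fixes f :: "_ \<Rightarrow> real"
  assumes "f \<in> borel_measurable M" "\<And>x. 0 \<le> f x"
  shows "integral\<^sup>L M f = enn2real (\<integral>\<^sup>+x. ennreal (f x) \<partial>M)"
  by (rule integral_eq_nn_integral) (use assms in auto)

lemma per_j:
  assumes ij: "i \<le> j" and jn: "Suc j \<le> n" and Z: "(\<integral>\<omega>. cp_lik p y n \<omega> \<partial>P n) \<noteq> 0"
  shows "integrable (P n) (\<lambda>\<omega>. T (cp_X j \<omega>) * IC j i \<omega> * IC (Suc j) (Suc j) \<omega> * cp_lik p y n \<omega>) \<and>
    (\<integral>\<omega>. T (cp_X j \<omega>) * IC j i \<omega> * IC (Suc j) (Suc j) \<omega> * cp_lik p y n \<omega> \<partial>P n) =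
    aj j / Bj j * ((\<integral>\<omega>. IC j i \<omega> * IC (Suc j) (Suc j) \<omega> * cp_lik p y j \<omega> \<partial>P n)
       / (\<integral>\<omega>. IC (Suc j) (Suc j) \<omega> * cp_lik p y j \<omega> \<partial>P n)) * (\<integral>\<omega>. IC (Suc j) (Suc j) \<omega> * cp_lik p y n \<omega> \<partial>P n)"
proof -
  have j1: "1 \<le> j" using ij i1 by simp
  have jle: "j \<le> n" using jn by simp
  have j1n: "j \<in> {1..n}" "Suc j \<in> {1..n}" using j1 jn by auto
  note [measurable] = meas_TX[OF T_meas j1n(1)] meas_indC[OF j1n(1), of i] meas_indC[OF j1n(2), of "Suc j"]
     meas_lik[OF jle] meas_lik[OF order_refl] meas_rest[OF order_refl] T_meas
  have mTp[measurable]: "(\<lambda>x. max (T x) 0) \<in> borel_measurable borel"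
     "(\<lambda>x. max (- T x) 0) \<in> borel_measurable borel" "(\<lambda>x. \<bar>T x\<bar>) \<in> borel_measurable borel"
    by measurable
  let ?I = "\<lambda>\<omega>. IC j i \<omega>" and ?I' = "\<lambda>\<omega>. IC (Suc j) (Suc j) \<omega>"
  let ?W = "\<lambda>\<omega>. T (cp_X j \<omega>) * IC j i \<omega> * IC (Suc j) (Suc j) \<omega> * cp_lik p y n \<omega>"
  let ?v = "\<lambda>\<omega>. IC j i \<omega> * cp_lik p y j \<omega> * T (cp_X j \<omega>)"
  have Wm: "?W \<in> borel_measurable (P n)" by (rule meas_Pk) measurable
  have vm: "?v \<in> borel_measurable (P n)" by (rule meas_Pk) measurable
  have split: "cp_lik p y n \<omega> = cp_lik p y j \<omega> * rest j n \<omega>" for \<omega>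
    using lik_split[OF jle] unfolding rest_def by simp
  have hfW: "hf f j \<omega> * ?I' \<omega> * rest j n \<omega> = f (cp_X j \<omega>) * (?I \<omega> * ?I' \<omega> * cp_lik p y n \<omega>)" for f \<omega>
    unfolding hf_def split by (simp add: ac_simps)
  have hfv: "hf f j \<omega> = f (cp_X j \<omega>) * (?I \<omega> * cp_lik p y j \<omega>)" for f \<omega>
    unfolding hf_def by (simp add: ac_simps)
  have rW: "0 \<le> ?I \<omega> * ?I' \<omega> * cp_lik p y n \<omega>" for \<omega> by (simp add: lik_nonneg)
  have rv: "0 \<le> ?I \<omega> * cp_lik p y j \<omega>" for \<omega> by (simp add: lik_nonneg)

  define Bp where "Bp = (\<integral>\<^sup>+\<omega>. ennreal (?I \<omega> * cp_lik p y j \<omega>) \<partial>P n)"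
  define Dp where "Dp = (\<integral>\<^sup>+\<omega>. ennreal (?I \<omega> * ?I' \<omega> * cp_lik p y j \<omega>) \<partial>P n)"
  define Ep where "Ep = (\<integral>\<^sup>+\<omega>. ennreal (?I' \<omega> * cp_lik p y j \<omega>) \<partial>P n)"
  define Fp where "Fp = (\<integral>\<^sup>+\<omega>. ennreal (?I' \<omega> * cp_lik p y n \<omega>) \<partial>P n)"
  define Zp where "Zp = (\<integral>\<^sup>+\<omega>. ennreal (cp_lik p y n \<omega>) \<partial>P n)"
  define Ap where "Ap f = (\<integral>\<^sup>+\<omega>. ennreal (hf f j \<omega>) \<partial>P n)" for f
  define b where "b = \<beta> i (Suc j)"
  have b0: "0 \<le> b" unfolding b_def by (rule beta_nonneg)

  have Bj: "Bj j = enn2real Bp" unfolding Bj_def Bp_def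
    by (rule int_nn) (rule meas_Pk, measurable, simp add: lik_nonneg)
  have Dj: "(\<integral>\<omega>. ?I \<omega> * ?I' \<omega> * cp_lik p y j \<omega> \<partial>P n) = enn2real Dp" unfolding Dp_def
    by (rule int_nn) (rule meas_Pk, measurable, simp add: lik_nonneg)
  have Ej: "(\<integral>\<omega>. ?I' \<omega> * cp_lik p y j \<omega> \<partial>P n) = enn2real Ep" unfolding Ep_def
    by (rule int_nn) (rule meas_Pk, measurable, simp add: lik_nonneg)
  have Fj: "(\<integral>\<omega>. ?I' \<omega> * cp_lik p y n \<omega> \<partial>P n) = enn2real Fp" unfolding Fp_def
    by (rule int_nn) (rule meas_Pk, measurable, simp add: lik_nonneg)
  have Zj: "(\<integral>\<omega>. cp_lik p y n \<omega> \<partial>P n) = enn2real Zp" unfolding Zp_def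
    by (rule int_nn) (rule meas_Pk, measurable, simp add: lik_nonneg)
  have Zfin: "Zp \<noteq> \<infinity>" using Z Zj by auto

  have DB: "Dp = ennreal b * Bp"
  proof -
    have "Dp = (\<integral>\<^sup>+\<omega>. ennreal (hf (\<lambda>_. 1) j \<omega> * ?I' \<omega>) \<partial>P n)"
      unfolding Dp_def hf_def by (simp add: ac_simps)
    also have "\<dots> = ennreal b * (\<integral>\<^sup>+\<omega>. ennreal (hf (\<lambda>_. 1) j \<omega>) \<partial>P n)"
      unfolding b_def by (rule D_eq[OF _ j1 jn]) simp
    also have "\<dots> = ennreal b * Bp" unfolding Bp_def hf_def by simp
    finally show ?thesis .
  qed
  have EE: "Ep = E' j"
  proof -
    have "Ep = (\<integral>\<^sup>+\<omega>. ennreal (cp_lik p y j \<omega> * ?I' \<omega>) \<partial>P n)"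
      unfolding Ep_def by (simp add: ac_simps)
    also have "\<dots> = E' j" by (rule E_eq[OF j1 jn])
    finally show ?thesis .
  qed
  obtain R where R1: "(\<integral>\<^sup>+\<omega>. ennreal (cp_lik p y j \<omega> * ?I' \<omega> * rest j n \<omega>) \<partial>P n) = E' j * R"
     and R2: "\<And>f. f \<in> borel_measurable borel \<Longrightarrow>
        (\<integral>\<^sup>+\<omega>. ennreal (hf f j \<omega> * ?I' \<omega> * rest j n \<omega>) \<partial>P n) = ennreal b * Ap f * R"
    using FG[OF j1 jn] unfolding b_def Ap_def by blast
  have FR: "Fp = Ep * R"
  proof -
    have "Fp = (\<integral>\<^sup>+\<omega>. ennreal (cp_lik p y j \<omega> * ?I' \<omega> * rest j n \<omega>) \<partial>P n)"
      unfolding Fp_def split by (simp add: ac_simps)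
    then show ?thesis using R1 EE by simp
  qed
  have FZ: "Fp \<le> Zp" unfolding Fp_def Zp_def
    by (intro nn_integral_mono) (auto simp: indicator_def lik_nonneg)
  have DE: "Dp \<le> Ep" unfolding Dp_def Ep_def
    by (intro nn_integral_mono) (auto simp: indicator_def lik_nonneg)
  have Wform: "?W \<omega> = T (cp_X j \<omega>) * (?I \<omega> * ?I' \<omega> * cp_lik p y n \<omega>)" for \<omega>
    by (simp only: mult.assoc)
  have Wp: "(\<integral>\<^sup>+\<omega>. ennreal (?W \<omega>) \<partial>P n) = ennreal b * Ap (\<lambda>x. max (T x) 0) * R"
  proof -
    have "(\<integral>\<^sup>+\<omega>. ennreal (?W \<omega>) \<partial>P n) = (\<integral>\<^sup>+\<omega>. ennreal (hf (\<lambda>x. max (T x) 0) j \<omega> * ?I' \<omega> * rest j n \<omega>) \<partial>P n)"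
      unfolding hfW Wform by (intro nn_integral_cong) (rule enn_pos[OF rW])
    then show ?thesis using R2[OF mTp(1)] by simp
  qed
  have Wn: "(\<integral>\<^sup>+\<omega>. ennreal (- ?W \<omega>) \<partial>P n) = ennreal b * Ap (\<lambda>x. max (- T x) 0) * R"
  proof -
    have "(\<integral>\<^sup>+\<omega>. ennreal (- ?W \<omega>) \<partial>P n) = (\<integral>\<^sup>+\<omega>. ennreal (hf (\<lambda>x. max (- T x) 0) j \<omega> * ?I' \<omega> * rest j n \<omega>) \<partial>P n)"
      unfolding hfW Wform by (intro nn_integral_cong) (rule enn_neg[OF rW])
    then show ?thesis using R2[OF mTp(2)] by simp
  qed
  have Wa: "(\<integral>\<^sup>+\<omega>. ennreal \<bar>?W \<omega>\<bar> \<partial>P n) = ennreal b * Ap (\<lambda>x. \<bar>T x\<bar>) * R"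
  proof -
    have "(\<integral>\<^sup>+\<omega>. ennreal \<bar>?W \<omega>\<bar> \<partial>P n) = (\<integral>\<^sup>+\<omega>. ennreal (hf (\<lambda>x. \<bar>T x\<bar>) j \<omega> * ?I' \<omega> * rest j n \<omega>) \<partial>P n)"
      unfolding hfW Wform by (intro nn_integral_cong) (rule enn_abs[OF rW])
    then show ?thesis using R2[OF mTp(3)] by simp
  qed
  have vform: "?v \<omega> = T (cp_X j \<omega>) * (?I \<omega> * cp_lik p y j \<omega>)" for \<omega>
    by (rule mult.commute)
  have vp: "(\<integral>\<^sup>+\<omega>. ennreal (?v \<omega>) \<partial>P n) = Ap (\<lambda>x. max (T x) 0)"
    unfolding Ap_def hfv vform by (intro nn_integral_cong) (rule enn_pos[OF rv])
  have vn: "(\<integral>\<^sup>+\<omega>. ennreal (- ?v \<omega>) \<partial>P n) = Ap (\<lambda>x. max (- T x) 0)"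
    unfolding Ap_def hfv vform by (intro nn_integral_cong) (rule enn_neg[OF rv])
  have va: "(\<integral>\<^sup>+\<omega>. ennreal \<bar>?v \<omega>\<bar> \<partial>P n) = Ap (\<lambda>x. \<bar>T x\<bar>)"
    unfolding Ap_def hfv vform by (intro nn_integral_cong) (rule enn_abs[OF rv])
  show ?thesis
  proof (cases "R = 0 \<or> b = 0 \<or> Ap (\<lambda>x. \<bar>T x\<bar>) = 0")
    case True
    have "(\<integral>\<^sup>+\<omega>. ennreal \<bar>?W \<omega>\<bar> \<partial>P n) = 0" unfolding Wa using True by auto
    then have W0: "integrable (P n) ?W \<and> integral\<^sup>L (P n) ?W = 0" by (rule zero_int[OF Wm])
    have "aj j / Bj j * (enn2real Dp / enn2real Ep) * enn2real Fp = 0"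
    proof -
      { assume "R = 0" then have "Fp = 0" using FR by simp then have ?thesis by simp }
      moreover
      { assume "b = 0" then have "Dp = 0" using DB by simp then have ?thesis by simp }
      moreover
      { assume "Ap (\<lambda>x. \<bar>T x\<bar>) = 0"
        then have "integrable (P n) ?v \<and> integral\<^sup>L (P n) ?v = 0" using va by (intro zero_int[OF vm]) simp
        then have "aj j = 0" unfolding aj_def by simp
        then have ?thesis by simp }
      ultimately show ?thesis using True by blast
    qed
    then show ?thesis using W0 Dj Ej Fj by simp
  next
    case False
    then have R0: "R \<noteq> 0" and bpos: "0 < b" and A0: "Ap (\<lambda>x. \<bar>T x\<bar>) \<noteq> 0" using b0 by auto
    have Bfin: "Bp \<noteq> \<infinity>"
    proof
      assume "Bp = \<infinity>"
      then have "Dp = \<infinity>" using DB bpos by (simp add: ennreal_mult_eq_top_iff)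
      then have "Ep = \<infinity>" using DE by (simp add: top_unique)
      then have "Fp = \<infinity>" using FR R0 by (simp add: ennreal_mult_eq_top_iff)
      then show False using FZ Zfin by (simp add: top_unique)
    qed
    have Bnz: "Bp \<noteq> 0"
    proof
      assume B0: "Bp = 0"
      have "AE \<omega> in P n. ?I \<omega> * cp_lik p y j \<omega> = 0"
        by (rule AE_zero_of_nn) (rule meas_Pk, measurable, use B0 in \<open>simp add: Bp_def lik_nonneg\<close>)
      then have "AE \<omega> in P n. ennreal (hf (\<lambda>x. \<bar>T x\<bar>) j \<omega>) = 0"
        by eventually_elim (simp only: hfv mult_zero_right ennreal_0)
      then have "Ap (\<lambda>x. \<bar>T x\<bar>) = (\<integral>\<^sup>+\<omega>. 0 \<partial>P n)" unfolding Ap_def by (rule nn_integral_cong_AE)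
      then have "Ap (\<lambda>x. \<bar>T x\<bar>) = 0" by simp
      then show False using A0 by simp
    qed
    have Bpos: "0 < Bj j" unfolding Bj using Bfin Bnz by (simp add: enn2real_positive_iff less_top[symmetric] zero_less_iff_neq_zero)
    have iv: "integrable (P n) ?v" by (rule int_a[OF ij jle]) (use Bpos in simp)
    have Epos: "Ep \<noteq> 0"
    proof
      assume "Ep = 0" then have "Dp = 0" using DE by simp
      then show False using DB bpos Bnz by simp
    qed
    have Ffin: "Fp \<noteq> \<infinity>"
    proof
      assume "Fp = \<infinity>" then have "Zp = \<infinity>" using FZ by (simp add: top_unique)
      then show False using Zfin by simp
    qed
    have EpR_fin: "Ep * R \<noteq> \<infinity>" using FR Ffin by simp
    then have Efin: "Ep \<noteq> \<infinity>" and Rfin: "R \<noteq> \<infinity>" using Epos R0 by (auto simp: ennreal_mult_eq_top_iff)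
    define r where "r = enn2real R"
    have Rr: "R = ennreal r" unfolding r_def using Rfin by (simp add: ennreal_enn2real_if)
    have r0: "0 \<le> r" unfolding r_def by simp
    have tr: "integrable (P n) ?W \<and> integral\<^sup>L (P n) ?W = (b * r) * integral\<^sup>L (P n) ?v"
    proof (rule transfer[OF Wm iv])
      show "0 \<le> b * r" using b0 r0 by simp
      show "(\<integral>\<^sup>+\<omega>. ennreal (?W \<omega>) \<partial>P n) = ennreal (b * r) * (\<integral>\<^sup>+\<omega>. ennreal (?v \<omega>) \<partial>P n)"
        unfolding Wp vp Rr using b0 r0 by (simp add: ennreal_mult ac_simps)
      show "(\<integral>\<^sup>+\<omega>. ennreal (- ?W \<omega>) \<partial>P n) = ennreal (b * r) * (\<integral>\<^sup>+\<omega>. ennreal (- ?v \<omega>) \<partial>P n)"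
        unfolding Wn vn Rr using b0 r0 by (simp add: ennreal_mult ac_simps)
    qed
    define e where "e = enn2real Ep"
    have epos: "0 < e" unfolding e_def using Efin Epos by (simp add: enn2real_positive_iff less_top[symmetric] zero_less_iff_neq_zero)
    have Dv: "enn2real Dp = b * Bj j" unfolding DB Bj using b0 by (simp add: enn2real_mult)
    have Fv: "enn2real Fp = e * r" unfolding FR e_def r_def by (simp add: enn2real_mult)
    have "aj j / Bj j * (enn2real Dp / enn2real Ep) * enn2real Fp = (b * r) * aj j"
      unfolding Dv Fv e_def[symmetric] using Bpos epos by (simp add: field_simps)
    then show ?thesis using tr Dj Ej Fj unfolding aj_def by simp
  qed
qed

definition "V k \<omega> = T (cp_X k \<omega>) * IC k i \<omega> * cp_lik p y n \<omega>"
definition "W k \<omega> = T (cp_X k \<omega>) * IC k i \<omega> * IC (Suc k) (Suc k) \<omega> * cp_lik p y n \<omega>"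

lemma Zfin_of: assumes Z: "(\<integral>\<omega>. cp_lik p y n \<omega> \<partial>P n) \<noteq> 0"
  shows "(\<integral>\<^sup>+\<omega>. ennreal (cp_lik p y n \<omega>) \<partial>P n) \<noteq> \<infinity>"
proof -
  have [measurable]: "cp_lik p y n \<in> borel_measurable (PS n)" by (rule meas_lik) simp
  have "(\<integral>\<omega>. cp_lik p y n \<omega> \<partial>P n) = enn2real (\<integral>\<^sup>+\<omega>. ennreal (cp_lik p y n \<omega>) \<partial>P n)"
    by (rule int_nn) (rule meas_Pk, measurable, simp add: lik_nonneg)
  then show ?thesis using Z by auto
qed

lemma nterm:
  assumes Z: "(\<integral>\<omega>. cp_lik p y n \<omega> \<partial>P n) \<noteq> 0"
  shows "integrable (P n) (V n) \<and> integral\<^sup>L (P n) (V n) = aj n / Bj n * Bj n"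
proof -
  have n1: "n \<in> {1..n}" using i1 inn by simp
  note [measurable] = meas_TX[OF T_meas n1] meas_indC[OF n1, of i] meas_lik[OF order_refl]
  have Vm: "V n \<in> borel_measurable (P n)" unfolding V_def[abs_def] by (rule meas_Pk) measurable
  define Bp where "Bp = (\<integral>\<^sup>+\<omega>. ennreal (IC n i \<omega> * cp_lik p y n \<omega>) \<partial>P n)"
  have Bj: "Bj n = enn2real Bp" unfolding Bj_def Bp_def
    by (rule int_nn) (rule meas_Pk, measurable, simp add: lik_nonneg)
  have "Bp \<le> (\<integral>\<^sup>+\<omega>. ennreal (cp_lik p y n \<omega>) \<partial>P n)" unfolding Bp_def
    by (intro nn_integral_mono) (auto simp: indicator_def lik_nonneg)
  then have Bfin: "Bp \<noteq> \<infinity>" using Zfin_of[OF Z] by (auto simp: top_unique)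
  show ?thesis
  proof (cases "Bj n = 0")
    case True
    then have B0: "Bp = 0" using Bj Bfin by (auto simp: enn2real_eq_0_iff)
    have ae: "AE \<omega> in P n. IC n i \<omega> * cp_lik p y n \<omega> = 0"
      by (rule AE_zero_of_nn) (rule meas_Pk, measurable, use B0 in \<open>simp add: Bp_def lik_nonneg\<close>)
    have "(\<integral>\<^sup>+\<omega>. ennreal \<bar>V n \<omega>\<bar> \<partial>P n) = (\<integral>\<^sup>+\<omega>. 0 \<partial>P n)"
      by (rule nn_integral_cong_AE) (use ae in \<open>eventually_elim, simp add: V_def\<close>)
    then have "integrable (P n) (V n) \<and> integral\<^sup>L (P n) (V n) = 0"
      by (intro zero_int[OF Vm]) simp
    then show ?thesis using True by simp
  next
    case False
    have iv: "integrable (P n) (\<lambda>\<omega>. IC n i \<omega> * cp_lik p y n \<omega> * T (cp_X n \<omega>))"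
      by (rule int_a[OF inn order_refl False])
    have e: "V n = (\<lambda>\<omega>. IC n i \<omega> * cp_lik p y n \<omega> * T (cp_X n \<omega>))"
      unfolding V_def by (simp add: fun_eq_iff ac_simps)
    show ?thesis using iv False unfolding e aj_def by simp
  qed
qed

lemma VW:
  assumes ij: "i \<le> j" and jn: "Suc j \<le> n" and g: "good n \<omega>"
  shows "V j \<omega> = W j \<omega> + V (Suc j) \<omega>"
proof -
  have "Suc j \<in> {1..n}" "2 \<le> Suc j" using ij i1 jn by auto
  then have gg: "cp_C (Suc j) \<omega> = Suc j \<or> (cp_C (Suc j) \<omega> = cp_C j \<omega> \<and> T (cp_X (Suc j) \<omega>) = T (cp_X j \<omega>))"
    using g unfolding good_def by fastforce
  show ?thesis
  proof (cases "cp_C (Suc j) \<omega> = Suc j")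
    case True
    then have "cp_C (Suc j) \<omega> \<noteq> i" using ij by simp
    then show ?thesis using True unfolding V_def W_def by (simp add: indicator_def)
  next
    case False
    then have "cp_C (Suc j) \<omega> = cp_C j \<omega>" "T (cp_X (Suc j) \<omega>) = T (cp_X j \<omega>)" using gg by auto
    then show ?thesis using False unfolding V_def W_def by (simp add: indicator_def)
  qed
qed

lemma tele:
  assumes Z: "(\<integral>\<omega>. cp_lik p y n \<omega> \<partial>P n) \<noteq> 0"
  shows "k \<le> n \<Longrightarrow> i \<le> k \<Longrightarrow> integrable (P n) (V k) \<and>
     integral\<^sup>L (P n) (V k) = (\<Sum>j\<in>{k..<n}. integral\<^sup>L (P n) (W j)) + integral\<^sup>L (P n) (V n)"
proof (induction k rule: inc_induct)
  case base
  then show ?case using nterm[OF Z] by simp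
next
  case (step k)
  have ik: "i \<le> k" using step by simp
  have IH: "integrable (P n) (V (Suc k)) \<and>
     integral\<^sup>L (P n) (V (Suc k)) = (\<Sum>j\<in>{Suc k..<n}. integral\<^sup>L (P n) (W j)) + integral\<^sup>L (P n) (V n)"
    using step ik by simp
  have Wk: "integrable (P n) (W k) \<and> integral\<^sup>L (P n) (W k) = integral\<^sup>L (P n) (W k)"
    using per_j[OF ik _ Z] step unfolding W_def[abs_def] by simp
  have k1: "k \<in> {1..n}" using ik i1 step by simp
  have ae: "AE \<omega> in P n. V k \<omega> = W k \<omega> + V (Suc k) \<omega>"
    using AE_good[of n] by eventually_elim (rule VW[OF ik], use step in simp_all)
  have Vkm: "V k \<in> borel_measurable (P n)"
  proof -
    note [measurable] = meas_TX[OF T_meas k1] meas_indC[OF k1, of i] meas_lik[OF order_refl]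
    show ?thesis unfolding V_def[abs_def] by (rule meas_Pk) measurable
  qed
  have iWV: "integrable (P n) (\<lambda>\<omega>. W k \<omega> + V (Suc k) \<omega>)" using Wk IH by simp
  have "integrable (P n) (V k)"
    using iWV by (subst integrable_cong_AE[OF Vkm _ ae]) (use iWV in auto)
  moreover have "integral\<^sup>L (P n) (V k) = integral\<^sup>L (P n) (\<lambda>\<omega>. W k \<omega> + V (Suc k) \<omega>)"
    by (rule integral_cong_AE[OF Vkm _ ae]) (use iWV in auto)
  moreover have "{k..<n} = insert k {Suc k..<n}" using step by auto
  ultimately show ?case using Wk IH by simp
qed

lemma final:
  "(\<integral>\<omega>. V i \<omega> \<partial>P n) / (\<integral>\<omega>. cp_lik p y n \<omega> \<partial>P n) =
   (\<Sum>j\<in>{i..<n}. aj j / Bj j * ((\<integral>\<omega>. IC j i \<omega> * IC (Suc j) (Suc j) \<omega> * cp_lik p y j \<omega> \<partial>P n)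
       / (\<integral>\<omega>. IC (Suc j) (Suc j) \<omega> * cp_lik p y j \<omega> \<partial>P n)) *
       ((\<integral>\<omega>. IC (Suc j) (Suc j) \<omega> * cp_lik p y n \<omega> \<partial>P n) / (\<integral>\<omega>. cp_lik p y n \<omega> \<partial>P n)))
   + aj n / Bj n * (Bj n / (\<integral>\<omega>. cp_lik p y n \<omega> \<partial>P n))"
proof (cases "(\<integral>\<omega>. cp_lik p y n \<omega> \<partial>P n) = 0")
  case True
  then show ?thesis by simp
next
  case False
  define Z where "Z = (\<integral>\<omega>. cp_lik p y n \<omega> \<partial>P n)"
  have Z: "Z \<noteq> 0" using False unfolding Z_def .
  define t where "t j = aj j / Bj j * ((\<integral>\<omega>. IC j i \<omega> * IC (Suc j) (Suc j) \<omega> * cp_lik p y j \<omega> \<partial>P n)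
       / (\<integral>\<omega>. IC (Suc j) (Suc j) \<omega> * cp_lik p y j \<omega> \<partial>P n)) *
       (\<integral>\<omega>. IC (Suc j) (Suc j) \<omega> * cp_lik p y n \<omega> \<partial>P n)" for j
  have "(\<integral>\<omega>. V i \<omega> \<partial>P n) = (\<Sum>j\<in>{i..<n}. integral\<^sup>L (P n) (W j)) + integral\<^sup>L (P n) (V n)"
    using tele[OF False inn order_refl] by simp
  also have "(\<Sum>j\<in>{i..<n}. integral\<^sup>L (P n) (W j)) = (\<Sum>j\<in>{i..<n}. t j)"
  proof (rule sum.cong[OF refl])
    fix j assume "j \<in> {i..<n}"
    then have "i \<le> j" "Suc j \<le> n" by auto
    from per_j[OF this False] show "integral\<^sup>L (P n) (W j) = t j"
      unfolding W_def[abs_def] t_def by simp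
  qed
  also have "integral\<^sup>L (P n) (V n) = aj n / Bj n * Bj n" using nterm[OF False] by simp
  finally have eq: "(\<integral>\<omega>. V i \<omega> \<partial>P n) = (\<Sum>j\<in>{i..<n}. t j) + aj n / Bj n * Bj n" .
  show ?thesis
    unfolding eq Z_def[symmetric] t_def[symmetric]
    by (simp add: t_def sum_divide_distrib add_divide_distrib)
qed

end

theorem main_gen:
  fixes n :: nat
    and q :: "nat \<Rightarrow> nat \<Rightarrow> real"
    and J :: "'x::polish_space measure"
    and \<psi> :: "'y::polish_space measure"
    and p :: "'x \<Rightarrow> 'y \<Rightarrow> real"
    and y :: "nat \<Rightarrow> 'y"
    and T :: "'x \<Rightarrow> real"
    and i :: nat
  assumes n_pos: "1 \<le> n"
    and J_prob: "prob_space J" and J_sets: "sets J = sets borel"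
    and \<psi>_sets: "sets \<psi> = sets borel"
    and p_meas: "(\<lambda>(x, z). p x z) \<in> borel_measurable (borel \<Otimes>\<^sub>M \<psi>)"
    and p_nonneg: "\<And>x z. 0 \<le> p x z"
    and T_meas: "T \<in> borel_measurable borel"
    and T_int: "\<And>j i. 0 < i \<Longrightarrow> j \<le> i \<Longrightarrow> i \<le> n \<Longrightarrow> integrable (cp_H q J p y n j i) T"
    and i_range: "0 < i" "i \<le> n"
  shows "cp_condE q J p y n n (\<lambda>\<omega>. T (cp_X i \<omega>) * indicator {\<omega>. cp_C i \<omega> = i} \<omega>) UNIV
       = (\<Sum>j=i..n-1. (\<integral>x. T x \<partial>cp_H q J p y n i j) * cp_ct q J p y n i j * cp_qt q J p y n (Suc j))
         + (\<integral>x. T x \<partial>cp_H q J p y n i n) * cp_ct q J p y n i n"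
proof -
  have pm: "(\<lambda>x. p x z) \<in> borel_measurable borel" for z
  proof -
    have z: "z \<in> space \<psi>" using sets_eq_imp_space_eq[OF \<psi>_sets] by simp
    have "(\<lambda>x. (x, z)) \<in> borel \<rightarrow>\<^sub>M borel \<Otimes>\<^sub>M \<psi>" using z by simp
    from measurable_compose[OF this p_meas] show ?thesis by simp
  qed
  interpret cpm3 q J p y T n i
    apply unfold_locales
    using sigma_finite_measure.sigma_finite_countable[OF prob_space_imp_sigma_finite[OF J_prob]] apply blast
    using prob_space.emeasure_space_1[OF J_prob] apply simp
    using prob_space.emeasure_space_1[OF J_prob] apply simp
    apply (rule J_sets)
    apply (rule pm)
    apply (rule p_nonneg)
    apply (rule T_meas)
    using i_range apply simp
    using i_range apply simp
    apply (rule T_int)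
    using i_range apply auto
    done
  have Hs: "(\<integral>x. T x \<partial>cp_H q J p y n i j) = aj j / Bj j" if "i \<le> j" "j \<le> n" for j
    by (rule HT) (use that i_range in auto)
  have rng: "{i..n-1} = {i..<n}" using n_pos by auto
  have L: "cp_condE q J p y n n (\<lambda>\<omega>. T (cp_X i \<omega>) * indicator {\<omega>. cp_C i \<omega> = i} \<omega>) UNIV =
      (\<integral>\<omega>. V i \<omega> \<partial>P n) / (\<integral>\<omega>. cp_lik p y n \<omega> \<partial>P n)"
    unfolding cp_condE_def V_def by simp
  have S: "(\<Sum>j=i..n-1. (\<integral>x. T x \<partial>cp_H q J p y n i j) * cp_ct q J p y n i j * cp_qt q J p y n (Suc j)) =
    (\<Sum>j\<in>{i..<n}. aj j / Bj j * ((\<integral>\<omega>. IC j i \<omega> * IC (Suc j) (Suc j) \<omega> * cp_lik p y j \<omega> \<partial>P n)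
       / (\<integral>\<omega>. IC (Suc j) (Suc j) \<omega> * cp_lik p y j \<omega> \<partial>P n)) *
       ((\<integral>\<omega>. IC (Suc j) (Suc j) \<omega> * cp_lik p y n \<omega> \<partial>P n) / (\<integral>\<omega>. cp_lik p y n \<omega> \<partial>P n)))"
    unfolding rng
  proof (rule sum.cong[OF refl])
    fix j assume j: "j \<in> {i..<n}"
    then show "(\<integral>x. T x \<partial>cp_H q J p y n i j) * cp_ct q J p y n i j * cp_qt q J p y n (Suc j) =
      aj j / Bj j * ((\<integral>\<omega>. IC j i \<omega> * IC (Suc j) (Suc j) \<omega> * cp_lik p y j \<omega> \<partial>P n)
       / (\<integral>\<omega>. IC (Suc j) (Suc j) \<omega> * cp_lik p y j \<omega> \<partial>P n)) *
       ((\<integral>\<omega>. IC (Suc j) (Suc j) \<omega> * cp_lik p y n \<omega> \<partial>P n) / (\<integral>\<omega>. cp_lik p y n \<omega> \<partial>P n))"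
      using Hs[of j] unfolding cp_ct_def cp_qt_def cp_condP_def cp_condE_def by simp
  qed
  have N: "(\<integral>x. T x \<partial>cp_H q J p y n i n) * cp_ct q J p y n i n = aj n / Bj n * (Bj n / (\<integral>\<omega>. cp_lik p y n \<omega> \<partial>P n))"
    using Hs[of n] i_range unfolding cp_ct_def cp_condP_def cp_condE_def Bj_def by simp
  show ?thesis unfolding L S N by (rule final)
qed

theorem mainTheorem17:
  fixes n :: nat
    and q :: "nat \<Rightarrow> nat \<Rightarrow> real"
    and J :: "'x::polish_space measure"
    and \<psi> :: "'y::polish_space measure"
    and p :: "'x \<Rightarrow> 'y \<Rightarrow> real"
    and y :: "nat \<Rightarrow> 'y"
    and T :: "'x \<Rightarrow> real"
    and i :: nat
  assumes n_pos: "1 \<le> n"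
    and J_prob: "prob_space J" and J_sets: "sets J = sets borel"
    and \<psi>_sets: "sets \<psi> = sets borel" and \<psi>_fin: "sigma_finite_measure \<psi>"
    and q_range: "\<And>j i. j < i \<Longrightarrow> i \<le> n \<Longrightarrow> 0 \<le> q j i \<and> q j i \<le> 1"
    and p_meas: "(\<lambda>(x, z). p x z) \<in> borel_measurable (borel \<Otimes>\<^sub>M \<psi>)"
    and p_nonneg: "\<And>x z. 0 \<le> p x z"
    and p_dens: "\<And>x. (\<integral>\<^sup>+ z. ennreal (p x z) \<partial>\<psi>) = 1"
    and pos: "\<And>j i. 0 < j \<Longrightarrow> j \<le> i \<Longrightarrow> i \<le> n \<Longrightarrow>
               (\<integral>\<^sup>+ x. ennreal (\<Prod>l\<in>{j..i}. p x (y l)) \<partial>J) > 0"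
    and T_meas: "T \<in> borel_measurable borel"
    and T_int: "\<And>j i. 0 < i \<Longrightarrow> j \<le> i \<Longrightarrow> i \<le> n \<Longrightarrow> integrable (cp_H q J p y n j i) T"
    and i_range: "0 < i" "i \<le> n"
  shows "cp_condE q J p y n n (\<lambda>\<omega>. T (cp_X i \<omega>) * indicator {\<omega>. cp_C i \<omega> = i} \<omega>) UNIV
       = (\<Sum>j=i..n-1. (\<integral>x. T x \<partial>cp_H q J p y n i j) * cp_ct q J p y n i j * cp_qt q J p y n (Suc j))
         + (\<integral>x. T x \<partial>cp_H q J p y n i n) * cp_ct q J p y n i n"
  by (rule main_gen[OF n_pos J_prob J_sets \<psi>_sets p_meas p_nonneg T_meas T_int i_range])

end
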